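(* Let $\Gamma'<G_d$ be a discrete subgroup, $x=g\Gamma'\in G_d/\Gamma'$, and let $\Theta$ be a geometric limit of the sequence of subgroups $a_{t_j}g\Gamma'g^{-1}a_{-t_j}$ for some $t_j\to+\infty$. If $e\neq\theta\in\Theta\cap NMAU$, then $\delta(\theta)x\in\overline{Nx}$; more precisely there are $n_j\in N$ with $n_jx\to\delta(\theta)x$. In particular $\delta(\Theta)\subseteq\Delta_x$.
   Context: $d\ge2$, $G_d=\mathrm{SO}^+(d,1)$ identified with the frame bundle of $\mathbb{H}^d$; $K$ a point stabilizer, $A=\{a_t\}$ the geodesic frame flow subgroup, $M=Z_K(A)$, $N=\{n:a_tna_{-t}\to e\text{ as }t\to+\infty\}$, $U=\{u:a_{-t}ua_t\to e\text{ as }t\to+\infty\}$. The set $NMAU$ is open and every element of it has a unique decomposition $n\ell u$ with $n\in N,\ell\in MA,u\in U$ (the multiplication map $N\times MA\times U\to NMAU$ is a diffeomorphism); define $\delta:G_d\to MA$ by $\delta(n\ell u)=\ell$ on $NMAU$ and $\delta(g)=e$ otherwise. A closed subgroup $\Theta$ is a geometric limit of closed subgroups $\Gamma_j$ if a subsequence converges to $\Theta$ in the Chabauty topology (Hausdorff convergence on compact subsets). $\Delta_x=\{\ell\in MA:\ell x\in\overline{Nx}\}$. *)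

theory Defs
  imports "HOL-Analysis.Analysis"
begin

text \<open>Coordinates of R^(d+1): None is the time-like coordinate, Some None is the
  spatial direction of the geodesic flow, Some (Some i) (i in 'n) are the remaining
  spatial coordinates.  Hence d = CARD('n) + 1 \<ge> 2.\<close>
type_synonym 'n idx = "'n option option"
type_synonym 'n mat = "real ^ 'n idx ^ 'n idx"

definition lorentzJ :: "('n::finite) mat" where
  "lorentzJ = (\<chi> i j. if i = j then (if i = None then -1 else 1) else 0)"

definition Gd :: "('n::finite) mat set" where
  "Gd = {g. transpose g ** lorentzJ ** g = lorentzJ \<and> det g = 1 \<and> g $ None $ None > 0}"

definition aflow :: "real \<Rightarrow> ('n::finite) mat" where
  "aflow t = (\<chi> i j.
     if i \<in> {None, Some None} \<and> j \<in> {None, Some None}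
     then (if i = j then cosh t else sinh t)
     else (if i = j then 1 else 0))"

definition Kgrp :: "('n::finite) mat set" where
  "Kgrp = {k \<in> Gd. k *v (axis None 1) = axis None 1}"

definition Mgrp :: "('n::finite) mat set" where
  "Mgrp = {m \<in> Kgrp. \<forall>t. m ** aflow t = aflow t ** m}"

definition MAgrp :: "('n::finite) mat set" where
  "MAgrp = {m ** aflow t | m t. m \<in> Mgrp}"

definition Ngrp :: "('n::finite) mat set" where
  "Ngrp = {n \<in> Gd. ((\<lambda>t. aflow t ** n ** aflow (- t)) \<longlongrightarrow> mat 1) at_top}"

definition Ugrp :: "('n::finite) mat set" where
  "Ugrp = {u \<in> Gd. ((\<lambda>t. aflow (- t) ** u ** aflow t) \<longlongrightarrow> mat 1) at_top}"

definition NMAU :: "('n::finite) mat set" where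
  "NMAU = {n ** l ** u | n l u. n \<in> Ngrp \<and> l \<in> MAgrp \<and> u \<in> Ugrp}"

definition delta :: "('n::finite) mat \<Rightarrow> 'n mat" where
  "delta g = (if g \<in> NMAU
     then (THE l. l \<in> MAgrp \<and> (\<exists>n u. n \<in> Ngrp \<and> u \<in> Ugrp \<and> g = n ** l ** u))
     else mat 1)"

definition is_subgroup :: "('n::finite) mat set \<Rightarrow> bool" where
  "is_subgroup H \<longleftrightarrow> H \<subseteq> Gd \<and> mat 1 \<in> H \<and>
     (\<forall>x\<in>H. \<forall>y\<in>H. x ** y \<in> H) \<and> (\<forall>x\<in>H. matrix_inv x \<in> H)"

definition discrete_set :: "'a::metric_space set \<Rightarrow> bool" where
  "discrete_set S \<longleftrightarrow> (\<forall>x\<in>S. \<exists>e>0. \<forall>y\<in>S. dist y x < e \<longrightarrow> y = x)"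

text \<open>Chabauty convergence of closed subsets (Kuratowski--Painleve form).\<close>
definition chabauty_conv :: "(nat \<Rightarrow> 'a::metric_space set) \<Rightarrow> 'a set \<Rightarrow> bool" where
  "chabauty_conv S L \<longleftrightarrow>
     (\<forall>h\<in>L. \<exists>s. (\<forall>j. s j \<in> S j) \<and> s \<longlonglongrightarrow> h) \<and>
     (\<forall>h r s. strict_mono r \<and> (\<forall>k. s k \<in> S (r k)) \<and> s \<longlonglongrightarrow> h \<longrightarrow> h \<in> L)"

definition geometric_limit :: "(nat \<Rightarrow> 'a::metric_space set) \<Rightarrow> 'a set \<Rightarrow> bool" where
  "geometric_limit S L \<longleftrightarrow> (\<exists>r. strict_mono r \<and> chabauty_conv (S \<circ> r) L)"

definition gcoset :: "('n::finite) mat \<Rightarrow> 'n mat set \<Rightarrow> 'n mat set" where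
  "gcoset g H = (\<lambda>h. g ** h) ` H"

definition quot_space :: "('n::finite) mat set \<Rightarrow> 'n mat set set" where
  "quot_space H = {gcoset g H | g. g \<in> Gd}"

definition quot_top :: "('n::finite) mat set \<Rightarrow> 'n mat set topology" where
  "quot_top H = topology (\<lambda>S. S \<subseteq> quot_space H \<and> openin (top_of_set Gd) (\<Union>S))"

definition Delta_x :: "('n::finite) mat \<Rightarrow> 'n mat set \<Rightarrow> 'n mat set" where
  "Delta_x g H = {l \<in> MAgrp. gcoset (l ** g) H \<in>
      (quot_top H) closure_of {gcoset (n ** g) H | n. n \<in> Ngrp}}"

end

theory Submission
  imports Defs
begin

lemma sum_opt2:
  fixes f :: "('n::finite) option option \<Rightarrow> 'a::comm_monoid_add"
  shows "(\<Sum>x\<in>UNIV. f x) = f None + f (Some None) + (\<Sum>i\<in>UNIV. f (Some (Some i)))"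
proof -
  have "(\<Sum>x\<in>UNIV. f x) = f None + (\<Sum>y\<in>UNIV. f (Some y))"
    by (subst UNIV_option_conv) (simp add: sum.reindex)
  also have "(\<Sum>y\<in>UNIV. f (Some y)) = f (Some None) + (\<Sum>i\<in>UNIV. f (Some (Some i)))"
    by (subst UNIV_option_conv) (simp add: sum.reindex)
  finally show ?thesis by (simp add: add.assoc)
qed

lemma all_opt2: "(\<forall>x::'n option option. P x) \<longleftrightarrow> P None \<and> P (Some None) \<and> (\<forall>k. P (Some (Some k)))"
  by (metis option.exhaust)

definition Pp :: "('n::finite) mat" where
  "Pp = (\<chi> i j. if i \<in> {None, Some None} \<and> j \<in> {None, Some None} then 1/2 else 0)"
definition Pm :: "('n::finite) mat" where
  "Pm = (\<chi> i j. if i \<in> {None, Some None} \<and> j \<in> {None, Some None} then (if i = j then 1/2 else -1/2) else 0)"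
definition P0 :: "('n::finite) mat" where
  "P0 = (\<chi> i j. if i = j \<and> i \<notin> {None, Some None} then 1 else 0)"

lemma Pp_simps[simp]:
  "Pp $ None $ None = 1/2" "Pp $ None $ Some None = 1/2" "Pp $ Some None $ None = 1/2" "Pp $ Some None $ Some None = 1/2"
  "Pp $ Some (Some k) $ j = 0" "Pp $ i $ Some (Some k) = 0"
  by (auto simp: Pp_def)
lemma Pm_simps[simp]:
  "Pm $ None $ None = 1/2" "Pm $ None $ Some None = -1/2" "Pm $ Some None $ None = -1/2" "Pm $ Some None $ Some None = 1/2"
  "Pm $ Some (Some k) $ j = 0" "Pm $ i $ Some (Some k) = 0"
  by (auto simp: Pm_def)
lemma P0_simps[simp]:
  "P0 $ None $ j = 0" "P0 $ Some None $ j = 0" "P0 $ i $ None = 0" "P0 $ i $ Some None = 0"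
  "P0 $ Some (Some k) $ Some (Some l) = (if k = l then 1 else 0)"
  by (auto simp: P0_def)
lemma mat1_simps[simp]:
  "(mat 1 :: ('n::finite) mat) $ None $ None = 1" "(mat 1 :: ('n::finite) mat) $ Some None $ Some None = 1"
  "(mat 1 :: ('n::finite) mat) $ None $ Some x = 0" "(mat 1 :: ('n::finite) mat) $ Some x $ None = 0"
  "(mat 1 :: ('n::finite) mat) $ Some None $ Some (Some k) = 0" "(mat 1 :: ('n::finite) mat) $ Some (Some k) $ Some None = 0"
  "(mat 1 :: ('n::finite) mat) $ Some (Some k) $ Some (Some l) = (if k = l then 1 else 0)"
  by (auto simp: mat_def)

lemma mat_eq_iff3:
  fixes A B :: "('n::finite) mat"
  shows "A = B \<longleftrightarrow> (\<forall>i j. A $ i $ j = B $ i $ j)"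
  by (simp add: vec_eq_iff)

lemma mmult_nth: "(A ** B) $ i $ j = (\<Sum>k\<in>UNIV. A $ i $ k * B $ k $ j)"
  by (simp add: matrix_matrix_mult_def)

lemmas mcomp = mat_eq_iff3 all_opt2 mmult_nth sum_opt2

lemma PpPp: "Pp ** Pp = (Pp :: ('n::finite) mat)" by (simp add: mcomp)
lemma PmPm: "Pm ** Pm = (Pm :: ('n::finite) mat)" by (simp add: mcomp)
lemma P0P0: "P0 ** P0 = (P0 :: ('n::finite) mat)" by (simp add: mcomp if_distrib cong: if_cong)
lemma PpPm: "Pp ** Pm = (0 :: ('n::finite) mat)" by (simp add: mcomp)
lemma PmPp: "Pm ** Pp = (0 :: ('n::finite) mat)" by (simp add: mcomp)
lemma PpP0: "Pp ** P0 = (0 :: ('n::finite) mat)" by (simp add: mcomp)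
lemma P0Pp: "P0 ** Pp = (0 :: ('n::finite) mat)" by (simp add: mcomp)
lemma PmP0: "Pm ** P0 = (0 :: ('n::finite) mat)" by (simp add: mcomp)
lemma P0Pm: "P0 ** Pm = (0 :: ('n::finite) mat)" by (simp add: mcomp)
lemma Psum: "Pp + P0 + Pm = (mat 1 :: ('n::finite) mat)" by (simp add: mcomp)



lemma J_simps[simp]:
  "lorentzJ $ None $ None = -1" "lorentzJ $ Some None $ Some None = 1"
  "lorentzJ $ Some (Some k) $ Some (Some l) = (if k = l then 1 else 0)"
  "lorentzJ $ None $ Some x = 0" "lorentzJ $ Some x $ None = 0"
  "lorentzJ $ Some None $ Some (Some k) = 0" "lorentzJ $ Some (Some k) $ Some None = 0"
  by (auto simp: lorentzJ_def)

lemma aflow_simps[simp]: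
  "aflow t $ None $ None = cosh t" "aflow t $ None $ Some None = sinh t"
  "aflow t $ Some None $ None = sinh t" "aflow t $ Some None $ Some None = cosh t"
  "aflow t $ None $ Some (Some k) = 0" "aflow t $ Some (Some k) $ None = 0"
  "aflow t $ Some None $ Some (Some k) = 0" "aflow t $ Some (Some k) $ Some None = 0"
  "aflow t $ Some (Some k) $ Some (Some l) = (if k = l then 1 else 0)"
  by (auto simp: aflow_def)

lemma aflow_eq: "aflow t = P0 + exp t *\<^sub>R Pp + exp (-t) *\<^sub>R (Pm :: ('n::finite) mat)"
  by (simp add: mcomp cosh_def sinh_def field_simps)

lemma transpose_P[simp]: "transpose Pp = Pp" "transpose Pm = Pm" "transpose P0 = P0" "transpose lorentzJ = lorentzJ"
  by (simp_all add: mcomp transpose_def)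

lemma JP: "lorentzJ ** Pp = Pm ** lorentzJ" "lorentzJ ** Pm = Pp ** lorentzJ" "lorentzJ ** P0 = P0 ** lorentzJ"
   "lorentzJ ** lorentzJ = mat 1"
  by (simp_all add: mcomp if_distrib cong: if_cong)

lemma aflow_add: "aflow s ** aflow t = aflow (s + t)"
  by (simp add: mcomp cosh_add sinh_add if_distrib cong: if_cong)

lemma aflow_0[simp]: "aflow 0 = mat 1"
  by (simp add: mcomp)



definition lor :: "('n::finite) mat \<Rightarrow> bool" where
  "lor g \<longleftrightarrow> transpose g ** lorentzJ ** g = lorentzJ"

definition linv :: "('n::finite) mat \<Rightarrow> 'n mat" where
  "linv g = lorentzJ ** transpose g ** lorentzJ"

lemma Gd_lor: "g \<in> Gd \<Longrightarrow> lor g" by (simp add: Gd_def lor_def)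

lemma linv_left: "lor g \<Longrightarrow> linv g ** g = mat 1"
proof -
  assume "lor g"
  hence "linv g ** g = lorentzJ ** (transpose g ** lorentzJ ** g)"
    by (simp add: linv_def matrix_mul_assoc)
  also have "\<dots> = mat 1" using \<open>lor g\<close> by (simp add: lor_def JP)
  finally show ?thesis .
qed

lemma linv_right: "lor g \<Longrightarrow> g ** linv g = mat 1"
  using linv_left matrix_left_right_inverse by blast

lemma matrix_inv_unique:
  fixes A B :: "real^'n^'n"
  assumes "A ** B = mat 1" "B ** A = mat 1"
  shows "matrix_inv A = B"
proof -
  have ex: "\<exists>A'. A ** A' = mat 1 \<and> A' ** A = mat 1" using assms by blast
  obtain A' where A': "A ** A' = mat 1" "A' ** A = mat 1" "matrix_inv A = A'"
    using someI_ex[OF ex] unfolding matrix_inv_def by blast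
  have "A' = A' ** (A ** B)" using assms by simp
  also have "\<dots> = B" using A' by (simp add: matrix_mul_assoc)
  finally show ?thesis using A' by simp
qed

lemma matrix_inv_lor: "lor g \<Longrightarrow> matrix_inv g = linv g"
  by (simp add: matrix_inv_unique linv_left linv_right)

lemma lor_mult: "lor g \<Longrightarrow> lor h \<Longrightarrow> lor (g ** h)"
proof -
  assume g: "lor g" and h: "lor h"
  have "transpose (g ** h) ** lorentzJ ** (g ** h) = transpose h ** (transpose g ** lorentzJ ** g) ** h"
    by (simp add: matrix_transpose_mul matrix_mul_assoc)
  also have "\<dots> = lorentzJ" using g h by (simp add: lor_def)
  finally show ?thesis by (simp add: lor_def)
qed

lemma lor_row: "lor g \<Longrightarrow> g ** lorentzJ ** transpose g = lorentzJ"
proof -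
  assume g: "lor g"
  have "g ** lorentzJ ** transpose g ** lorentzJ = g ** linv g"
    by (simp add: linv_def matrix_mul_assoc)
  hence "g ** lorentzJ ** transpose g ** lorentzJ = mat 1" using linv_right[OF g] by simp
  hence "g ** lorentzJ ** transpose g ** lorentzJ ** lorentzJ = lorentzJ" by simp
  thus ?thesis by (simp add: JP flip: matrix_mul_assoc)
qed

lemma lor_linv: "lor g \<Longrightarrow> lor (linv g)"
proof -
  assume g: "lor g"
  have "transpose (linv g) ** lorentzJ ** linv g =
        lorentzJ ** (g ** (lorentzJ ** lorentzJ) ** lorentzJ ** transpose g) ** lorentzJ"
    by (simp add: linv_def matrix_transpose_mul matrix_mul_assoc)
  also have "\<dots> = lorentzJ ** (g ** lorentzJ ** transpose g) ** lorentzJ"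
    by (simp add: JP)
  also have "\<dots> = lorentzJ" using lor_row[OF g] by (simp add: JP flip: matrix_mul_assoc)
  finally show ?thesis by (simp add: lor_def)
qed

lemma det_J: "det (lorentzJ :: ('n::finite) mat) * det (lorentzJ :: ('n::finite) mat) = 1"
  by (metis JP(4) det_I det_mul)

lemma lor_det: fixes g :: "('n::finite) mat" shows "lor g \<Longrightarrow> det g * det g = 1"
proof -
  assume "lor g"
  hence "det (transpose g ** lorentzJ ** g) = det (lorentzJ :: ('n::finite) mat)" by (simp add: lor_def)
  hence "det g * det g * det (lorentzJ :: ('n::finite) mat) = det (lorentzJ :: ('n::finite) mat)"
    by (simp add: det_mul)
  moreover have "det (lorentzJ :: ('n::finite) mat) \<noteq> 0" using det_J by (metis mult_zero_left zero_neq_one)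
  ultimately show ?thesis by simp
qed

lemma linv_nn: "linv g $ None $ None = g $ None $ None"
  by (simp add: linv_def mmult_nth sum_opt2 transpose_def)

lemma sum_opt1:
  fixes f :: "('n::finite) option \<Rightarrow> 'a::comm_monoid_add"
  shows "(\<Sum>x\<in>UNIV. f x) = f None + (\<Sum>i\<in>UNIV. f (Some i))"
  by (subst UNIV_option_conv) (simp add: sum.reindex)

lemma lor_col:
  fixes h :: "('n::finite) mat"
  assumes "lor h"
  shows "(h$None$None)^2 = 1 + (h$Some None$None)^2 + (\<Sum>i\<in>UNIV. (h$Some (Some i)$None)^2)"
proof -
  have "(transpose h ** lorentzJ ** h)$None$None = -1" using assms by (simp add: lor_def)
  thus ?thesis by (simp add: mmult_nth sum_opt2 transpose_def if_distrib power2_eq_square cong: if_cong)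
qed

lemma lor_rowp:
  fixes g :: "('n::finite) mat"
  assumes "lor g"
  shows "(g$None$None)^2 = 1 + (g$None$Some None)^2 + (\<Sum>i\<in>UNIV. (g$None$Some (Some i))^2)"
proof -
  have "(g ** lorentzJ ** transpose g)$None$None = -1" using lor_row[OF assms] by simp
  thus ?thesis by (simp add: mmult_nth sum_opt2 transpose_def if_distrib power2_eq_square cong: if_cong)
qed

lemma lor_pos_mult:
  fixes g h :: "('n::finite) mat"
  assumes g: "lor g" and h: "lor h" and gp: "g$None$None > 0" and hp: "h$None$None > 0"
  shows "(g ** h)$None$None > 0"
proof -
  define a :: "real^('n option)" where "a = (\<chi> j. g$None$Some j)"
  define b :: "real^('n option)" where "b = (\<chi> j. h$Some j$None)"
  have e: "(g ** h)$None$None = g$None$None * h$None$None + inner a b"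
    by (simp add: mmult_nth sum_opt2 a_def b_def inner_vec_def sum_opt1 add.assoc)
  have ea: "inner a a = (g$None$None)^2 - 1"
    using lor_rowp[OF g] by (simp add: a_def inner_vec_def sum_opt1 power2_eq_square)
  have eb: "inner b b = (h$None$None)^2 - 1"
    using lor_col[OF h] by (simp add: b_def inner_vec_def sum_opt1 power2_eq_square)
  have cs: "(inner a b)^2 \<le> inner a a * inner b b" by (rule Cauchy_Schwarz_ineq)
  have "inner a a \<ge> 0" "inner b b \<ge> 0" by auto
  have "(g$None$None)^2 \<ge> 1" "(h$None$None)^2 > 0" using ea eb \<open>inner a a \<ge> 0\<close> hp by auto
  moreover have "((g$None$None)^2 - 1) * ((h$None$None)^2 - 1) = (g$None$None * h$None$None)^2 - (g$None$None)^2 - (h$None$None)^2 + 1"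
    by (simp add: algebra_simps power_mult_distrib)
  moreover have "(inner a b)^2 \<le> ((g$None$None)^2 - 1) * ((h$None$None)^2 - 1)" using cs ea eb by simp
  ultimately have "(inner a b)^2 < (g$None$None * h$None$None)^2"
    by linarith
  hence "\<bar>inner a b\<bar> < g$None$None * h$None$None"
    using gp hp power2_less_imp_less[of "\<bar>inner a b\<bar>" "g$None$None * h$None$None"] by simp
  thus ?thesis using e by linarith
qed

lemma Gd_mult: "g \<in> Gd \<Longrightarrow> h \<in> Gd \<Longrightarrow> g ** h \<in> Gd"
  using lor_mult[of g h] lor_pos_mult[of g h] by (auto simp: Gd_def lor_def det_mul)

lemma Gd_linv: "g \<in> Gd \<Longrightarrow> linv g \<in> Gd"
proof -
  assume g: "g \<in> Gd"
  hence l: "lor g" by (rule Gd_lor)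
  have "det (linv g) = det g * (det (lorentzJ::('a::finite) mat) * det (lorentzJ::('a::finite) mat))"
    by (simp add: linv_def det_mul)
  hence "det (linv g) = 1" using g det_J by (simp add: Gd_def)
  thus ?thesis using lor_linv[OF l] linv_nn[of g] g by (simp add: Gd_def lor_def)
qed

lemma Gd_matrix_inv: "g \<in> Gd \<Longrightarrow> matrix_inv g \<in> Gd"
  by (simp add: Gd_linv Gd_lor matrix_inv_lor)

lemma Gd_inv_left: "g \<in> Gd \<Longrightarrow> matrix_inv g ** g = mat 1"
  by (simp add: Gd_lor linv_left matrix_inv_lor)
lemma Gd_inv_right: "g \<in> Gd \<Longrightarrow> g ** matrix_inv g = mat 1"
  by (simp add: Gd_lor linv_right matrix_inv_lor)

lemma continuous_on_mat_nth:
  fixes f :: "'a::topological_space \<Rightarrow> real^'n^'m"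
  shows "continuous_on S f \<Longrightarrow> continuous_on S (\<lambda>x. f x $ i $ j)"
  unfolding continuous_on_def by (auto intro!: tendsto_vec_nth)

lemma continuous_on_det:
  fixes f :: "'a::topological_space \<Rightarrow> real^'n^'n"
  assumes "continuous_on S f"
  shows "continuous_on S (\<lambda>x. det (f x))"
  unfolding det_def
  by (intro continuous_intros continuous_on_mat_nth assms)

lemma det_path:
  fixes f :: "real \<Rightarrow> ('n::finite) mat"
  assumes c: "continuous_on {0..1} f" and l: "\<And>s. s \<in> {0..1} \<Longrightarrow> lor (f s)" and d0: "det (f 0) = 1"
  shows "det (f 1) = 1"
proof (rule ccontr)
  assume "det (f 1) \<noteq> 1"
  moreover have "det (f 1) * det (f 1) = 1" using l[of 1] lor_det by auto
  ultimately have "det (f 1) = -1" by (metis mult_cancel_left1 square_eq_1_iff)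
  hence "\<exists>x. 0 \<le> x \<and> x \<le> 1 \<and> - det (f x) = 0"
    using d0 by (intro IVT') (auto intro!: continuous_intros continuous_on_det c)
  then obtain x where "x \<in> {0..1}" "det (f x) = 0" by auto
  thus False using l[of x] lor_det by force
qed

lemma lor_aflow: "lor (aflow t)"
proof -
  have "cosh t * cosh t - sinh t * sinh t = 1" using cosh_square_eq[of t] by (simp add: power2_eq_square)
  thus ?thesis by (simp add: lor_def mcomp transpose_def if_distrib cong: if_cong)
qed

lemma continuous_aflow: "continuous_on S (\<lambda>s. aflow (c * s))"
  unfolding aflow_eq by (intro continuous_intros)

lemma Gd_aflow: "aflow t \<in> Gd"
proof -
  have "det (aflow (t * 1)) = 1"
    by (rule det_path[where f = "\<lambda>s. aflow (t * s)"]) (simp_all add: continuous_aflow lor_aflow)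
  thus ?thesis using lor_aflow[of t] by (simp add: Gd_def lor_def)
qed

lemma Gd_one: "mat 1 \<in> Gd"
  by (simp add: Gd_def JP(4) lorentzJ_def)




lemma matrix_add_rdistrib: "(A + B) ** C = A ** C + B ** (C::real^'n^'m)"
  by (simp add: matrix_matrix_mult_def vec_eq_iff sum.distrib distrib_right)
lemma matrix_diff_rdistrib: "(A - B) ** C = A ** C - B ** (C::real^'n^'m)"
  by (simp add: matrix_matrix_mult_def vec_eq_iff sum_subtractf left_diff_distrib)
lemma matrix_diff_ldistrib: "C ** (A - B) = C ** A - C ** (B::real^'n^'m)"
  by (simp add: matrix_matrix_mult_def vec_eq_iff sum_subtractf right_diff_distrib)

lemma Pmul_simps[simp]:
  fixes Y :: "('n::finite) mat"
  shows "Y ** Pp ** Pp = Y ** Pp" "Y ** Pm ** Pm = Y ** Pm" "Y ** P0 ** P0 = Y ** P0"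
   "Y ** Pp ** Pm = 0" "Y ** Pp ** P0 = 0" "Y ** Pm ** Pp = 0" "Y ** Pm ** P0 = 0" "Y ** P0 ** Pp = 0" "Y ** P0 ** Pm = 0"
  by (simp_all add: PpPp PmPm P0P0 PpPm PmPp PpP0 P0Pp PmP0 P0Pm flip: matrix_mul_assoc)

lemmas Pprod = PpPp PmPm P0P0 PpPm PmPp PpP0 P0Pp PmP0 P0Pm

definition D :: "('n::finite) mat \<Rightarrow> 'n mat" where
  "D X = P0 ** X ** P0 + Pp ** X ** Pp + Pm ** X ** Pm"

lemma conj_expand:
  fixes X :: "('n::finite) mat"
  shows "aflow t ** X ** aflow (-t) = D X + exp t *\<^sub>R (P0 ** X ** Pm + Pp ** X ** P0) + exp (2*t) *\<^sub>R (Pp ** X ** Pm)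
      + exp (-t) *\<^sub>R (P0 ** X ** Pp + Pm ** X ** P0) + exp (-2*t) *\<^sub>R (Pm ** X ** Pp)"
proof -
  have e1: "exp t * exp (-t) = 1" "exp (-t) * exp t = 1" by (simp_all add: exp_minus)
  have e2: "exp t * exp t = exp (2*t)" "exp (-t) * exp (-t) = exp (-2*t)" by (simp_all flip: exp_add)
  show ?thesis
    unfolding aflow_eq D_def
    by (simp add: matrix_add_ldistrib matrix_add_rdistrib matrix_scalar_ac
       scaleR_add_right e1 e2 algebra_simps flip: scalar_matrix_assoc)
qed
lemma exp_neg_lim: "(c::real) > 0 \<Longrightarrow> ((\<lambda>t::real. exp (- (c * t))) \<longlongrightarrow> 0) at_top"
proof -
  assume c: "c > 0"
  have "filterlim (\<lambda>t::real. c * t) at_top at_top"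
    using filterlim_tendsto_pos_mult_at_top[OF tendsto_const c filterlim_ident] by simp
  hence "filterlim (\<lambda>t::real. - (c * t)) at_bot at_top"
    by (simp add: filterlim_uminus_at_top)
  thus ?thesis by (rule filterlim_compose[OF exp_at_bot])
qed

lemma exp_coeff:
  fixes c0 c1 c2 c3 c4 L :: "'a::real_normed_vector"
  assumes lim: "((\<lambda>t::real. c0 + exp t *\<^sub>R c1 + exp (2*t) *\<^sub>R c2 + exp (-t) *\<^sub>R c3 + exp (-2*t) *\<^sub>R c4) \<longlongrightarrow> L) at_top"
  shows "c2 = 0 \<and> c1 = 0 \<and> c0 = L"
proof -
  let ?F = "\<lambda>t::real. c0 + exp t *\<^sub>R c1 + exp (2*t) *\<^sub>R c2 + exp (-t) *\<^sub>R c3 + exp (-2*t) *\<^sub>R c4"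
  have l1: "((\<lambda>t::real. exp (- (1 * t))) \<longlongrightarrow> 0) at_top" by (rule exp_neg_lim) simp
  have l2: "((\<lambda>t::real. exp (- (2 * t))) \<longlongrightarrow> 0) at_top" by (rule exp_neg_lim) simp
  have l3: "((\<lambda>t::real. exp (- (3 * t))) \<longlongrightarrow> 0) at_top" by (rule exp_neg_lim) simp
  have l4: "((\<lambda>t::real. exp (- (4 * t))) \<longlongrightarrow> 0) at_top" by (rule exp_neg_lim) simp
  have A: "((\<lambda>t. exp (- (2 * t)) *\<^sub>R ?F t) \<longlongrightarrow> 0 *\<^sub>R L) at_top"
    by (intro tendsto_scaleR l2 lim)
  have E: "\<And>t. exp (- (2 * t)) *\<^sub>R ?F t = exp (- (2 * t)) *\<^sub>R c0 + exp (- (1 * t)) *\<^sub>R c1 + c2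
      + exp (- (3 * t)) *\<^sub>R c3 + exp (- (4 * t)) *\<^sub>R c4"
    by (simp add: scaleR_add_right scaleR_scaleR flip: exp_add)
  have B: "((\<lambda>t. exp (- (2 * t)) *\<^sub>R c0 + exp (- (1 * t)) *\<^sub>R c1 + c2
      + exp (- (3 * t)) *\<^sub>R c3 + exp (- (4 * t)) *\<^sub>R c4) \<longlongrightarrow> 0 *\<^sub>R c0 + 0 *\<^sub>R c1 + c2 + 0 *\<^sub>R c3 + 0 *\<^sub>R c4) at_top"
    by (intro tendsto_intros l1 l2 l3 l4)
  have "0 *\<^sub>R L = 0 *\<^sub>R c0 + 0 *\<^sub>R c1 + c2 + 0 *\<^sub>R c3 + 0 *\<^sub>R c4"
    by (rule tendsto_unique[OF trivial_limit_at_top_linorder A[unfolded E] B])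
  hence c2: "c2 = 0" by simp
  have A: "((\<lambda>t. exp (- (1 * t)) *\<^sub>R ?F t) \<longlongrightarrow> 0 *\<^sub>R L) at_top"
    by (intro tendsto_scaleR l1 lim)
  have E: "\<And>t. exp (- (1 * t)) *\<^sub>R ?F t = exp (- (1 * t)) *\<^sub>R c0 + c1
      + exp (- (2 * t)) *\<^sub>R c3 + exp (- (3 * t)) *\<^sub>R c4"
    using c2 by (simp add: scaleR_add_right scaleR_scaleR flip: exp_add)
  have B: "((\<lambda>t. exp (- (1 * t)) *\<^sub>R c0 + c1
      + exp (- (2 * t)) *\<^sub>R c3 + exp (- (3 * t)) *\<^sub>R c4) \<longlongrightarrow> 0 *\<^sub>R c0 + c1 + 0 *\<^sub>R c3 + 0 *\<^sub>R c4) at_top"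
    by (intro tendsto_intros l1 l2 l3)
  have "0 *\<^sub>R L = 0 *\<^sub>R c0 + c1 + 0 *\<^sub>R c3 + 0 *\<^sub>R c4"
    by (rule tendsto_unique[OF trivial_limit_at_top_linorder A[unfolded E] B])
  hence c1: "c1 = 0" by simp
  have E: "\<And>t. ?F t = c0 + exp (- (1 * t)) *\<^sub>R c3 + exp (- (2 * t)) *\<^sub>R c4"
    using c2 c1 by simp
  have B: "((\<lambda>t. c0 + exp (- (1 * t)) *\<^sub>R c3 + exp (- (2 * t)) *\<^sub>R c4) \<longlongrightarrow> c0 + 0 *\<^sub>R c3 + 0 *\<^sub>R c4) at_top"
    by (intro tendsto_intros l1 l2)
  have "L = c0 + 0 *\<^sub>R c3 + 0 *\<^sub>R c4"
    by (rule tendsto_unique[OF trivial_limit_at_top_linorder lim[unfolded E] B])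
  thus ?thesis using c2 c1 by simp
qed

lemma conj_expand':
  fixes X :: "('n::finite) mat"
  shows "aflow (-t) ** X ** aflow t = D X + exp t *\<^sub>R (P0 ** X ** Pp + Pm ** X ** P0) + exp (2*t) *\<^sub>R (Pm ** X ** Pp)
      + exp (-t) *\<^sub>R (P0 ** X ** Pm + Pp ** X ** P0) + exp (-2*t) *\<^sub>R (Pp ** X ** Pm)"
  using conj_expand[of "-t" X] by (simp add: algebra_simps)

lemma X_expand:
  fixes X :: "('n::finite) mat"
  shows "X = P0 ** X ** P0 + Pp ** X ** Pp + Pm ** X ** Pm + P0 ** X ** Pm + Pp ** X ** P0 + Pp ** X ** Pm
      + P0 ** X ** Pp + Pm ** X ** P0 + Pm ** X ** Pp"
proof -
  have "X = (Pp + P0 + Pm) ** X ** (Pp + P0 + Pm)" by (simp add: Psum)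
  thus ?thesis by (simp add: matrix_add_ldistrib matrix_add_rdistrib algebra_simps)
qed

definition lowU :: "('n::finite) mat \<Rightarrow> bool" where
  "lowU X \<longleftrightarrow> Pp ** X ** P0 = 0 \<and> Pp ** X ** Pm = 0 \<and> P0 ** X ** Pm = 0 \<and>
     Pp ** X ** Pp = Pp \<and> P0 ** X ** P0 = P0 \<and> Pm ** X ** Pm = Pm"
definition uppU :: "('n::finite) mat \<Rightarrow> bool" where
  "uppU X \<longleftrightarrow> P0 ** X ** Pp = 0 \<and> Pm ** X ** Pp = 0 \<and> Pm ** X ** P0 = 0 \<and>
     Pp ** X ** Pp = Pp \<and> P0 ** X ** P0 = P0 \<and> Pm ** X ** Pm = Pm"

lemmas mdist = matrix_add_ldistrib matrix_add_rdistrib matrix_scalar_ac matrix_mul_assoc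

lemma sep1:
  fixes A B :: "('n::finite) mat"
  shows "P0 ** A ** Pm + Pp ** B ** P0 = 0 \<Longrightarrow> P0 ** A ** Pm = 0 \<and> Pp ** B ** P0 = 0"
proof -
  assume h: "P0 ** A ** Pm + Pp ** B ** P0 = 0"
  have "P0 ** (P0 ** A ** Pm + Pp ** B ** P0) ** Pm = P0 ** A ** Pm" by (simp add: mdist Pprod)
  moreover have "Pp ** (P0 ** A ** Pm + Pp ** B ** P0) ** P0 = Pp ** B ** P0" by (simp add: mdist Pprod)
  ultimately show ?thesis using h by simp
qed

lemma sep2:
  fixes A B :: "('n::finite) mat"
  shows "P0 ** A ** Pp + Pm ** B ** P0 = 0 \<Longrightarrow> P0 ** A ** Pp = 0 \<and> Pm ** B ** P0 = 0"
proof -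
  assume h: "P0 ** A ** Pp + Pm ** B ** P0 = 0"
  have "P0 ** (P0 ** A ** Pp + Pm ** B ** P0) ** Pp = P0 ** A ** Pp" by (simp add: mdist Pprod)
  moreover have "Pm ** (P0 ** A ** Pp + Pm ** B ** P0) ** P0 = Pm ** B ** P0" by (simp add: mdist Pprod)
  ultimately show ?thesis using h by simp
qed

lemma D_one:
  fixes X :: "('n::finite) mat"
  shows "D X = mat 1 \<Longrightarrow> Pp ** X ** Pp = Pp \<and> P0 ** X ** P0 = P0 \<and> Pm ** X ** Pm = Pm"
proof -
  assume h: "D X = mat 1"
  have "Pp ** D X ** Pp = Pp ** X ** Pp" "P0 ** D X ** P0 = P0 ** X ** P0" "Pm ** D X ** Pm = Pm ** X ** Pm"
    by (simp_all add: D_def mdist Pprod)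
  thus ?thesis using h by (simp add: Pprod)
qed

lemma Ngrp_lowU: "n \<in> Ngrp \<Longrightarrow> lowU n"
proof -
  assume "n \<in> Ngrp"
  hence "((\<lambda>t. aflow t ** n ** aflow (- t)) \<longlongrightarrow> mat 1) at_top" by (simp add: Ngrp_def)
  hence "((\<lambda>t. D n + exp t *\<^sub>R (P0 ** n ** Pm + Pp ** n ** P0) + exp (2*t) *\<^sub>R (Pp ** n ** Pm)
      + exp (-t) *\<^sub>R (P0 ** n ** Pp + Pm ** n ** P0) + exp (-2*t) *\<^sub>R (Pm ** n ** Pp)) \<longlongrightarrow> mat 1) at_top"
    by (simp only: conj_expand)
  from exp_coeff[OF this] sep1 D_one show ?thesis by (auto simp: lowU_def)
qed

lemma Ugrp_uppU: "u \<in> Ugrp \<Longrightarrow> uppU u"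
proof -
  assume "u \<in> Ugrp"
  hence "((\<lambda>t. aflow (- t) ** u ** aflow t) \<longlongrightarrow> mat 1) at_top" by (simp add: Ugrp_def)
  hence "((\<lambda>t. D u + exp t *\<^sub>R (P0 ** u ** Pp + Pm ** u ** P0) + exp (2*t) *\<^sub>R (Pm ** u ** Pp)
      + exp (-t) *\<^sub>R (P0 ** u ** Pm + Pp ** u ** P0) + exp (-2*t) *\<^sub>R (Pp ** u ** Pm)) \<longlongrightarrow> mat 1) at_top"
    by (simp only: conj_expand')
  from exp_coeff[OF this] sep2 D_one show ?thesis by (auto simp: uppU_def)
qed

definition bdiag :: "('n::finite) mat \<Rightarrow> bool" where
  "bdiag X \<longleftrightarrow> P0 ** X ** Pm = 0 \<and> Pp ** X ** P0 = 0 \<and> Pp ** X ** Pm = 0 \<and>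
     P0 ** X ** Pp = 0 \<and> Pm ** X ** P0 = 0 \<and> Pm ** X ** Pp = 0"

lemma bdiag_comm:
  fixes X :: "('n::finite) mat"
  assumes "bdiag X"
  shows "X ** Pp = Pp ** X" "X ** P0 = P0 ** X" "X ** Pm = Pm ** X"
proof -
  have X: "X = P0 ** X ** P0 + Pp ** X ** Pp + Pm ** X ** Pm"
    using X_expand[of X] assms by (simp add: bdiag_def)
  have "X ** Pp = Pp ** X ** Pp" "Pp ** X = Pp ** X ** Pp"
    "X ** P0 = P0 ** X ** P0" "P0 ** X = P0 ** X ** P0"
    "X ** Pm = Pm ** X ** Pm" "Pm ** X = Pm ** X ** Pm"
    by (subst X, simp add: mdist Pprod)+
  thus "X ** Pp = Pp ** X" "X ** P0 = P0 ** X" "X ** Pm = Pm ** X" by simp_all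
qed

lemma comm_bdiag:
  fixes m :: "('n::finite) mat"
  assumes "\<And>t. m ** aflow t = aflow t ** m"
  shows "bdiag m"
proof -
  have c: "aflow t ** m ** aflow (- t) = m" for t
    by (metis assms aflow_add add.right_inverse aflow_0 matrix_mul_assoc matrix_mul_rid)
  have c': "aflow (- t) ** m ** aflow t = m" for t
    by (metis assms aflow_add add.left_inverse aflow_0 matrix_mul_assoc matrix_mul_rid)
  have "((\<lambda>t. aflow t ** m ** aflow (- t)) \<longlongrightarrow> m) at_top" by (simp add: c)
  hence "((\<lambda>t. D m + exp t *\<^sub>R (P0 ** m ** Pm + Pp ** m ** P0) + exp (2*t) *\<^sub>R (Pp ** m ** Pm)
      + exp (-t) *\<^sub>R (P0 ** m ** Pp + Pm ** m ** P0) + exp (-2*t) *\<^sub>R (Pm ** m ** Pp)) \<longlongrightarrow> m) at_top"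
    by (simp only: conj_expand)
  note a = exp_coeff[OF this]
  have "((\<lambda>t. aflow (- t) ** m ** aflow t) \<longlongrightarrow> m) at_top" by (simp add: c')
  hence "((\<lambda>t. D m + exp t *\<^sub>R (P0 ** m ** Pp + Pm ** m ** P0) + exp (2*t) *\<^sub>R (Pm ** m ** Pp)
      + exp (-t) *\<^sub>R (P0 ** m ** Pm + Pp ** m ** P0) + exp (-2*t) *\<^sub>R (Pp ** m ** Pm)) \<longlongrightarrow> m) at_top"
    by (simp only: conj_expand')
  note b = exp_coeff[OF this]
  show ?thesis using a b sep1 sep2 by (auto simp: bdiag_def)
qed




lemma MA_props:
  assumes "l \<in> MAgrp"
  shows "l \<in> Gd" "\<And>t. l ** aflow t = aflow t ** l"
proof -
  obtain m s where m: "m \<in> Mgrp" "l = m ** aflow s" using assms by (auto simp: MAgrp_def)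
  hence mG: "m \<in> Gd" and mc: "\<And>t. m ** aflow t = aflow t ** m" by (auto simp: Mgrp_def Kgrp_def)
  show "l \<in> Gd" using m mG Gd_aflow Gd_mult by metis
  fix t
  have "l ** aflow t = m ** aflow (s + t)" using m by (simp add: aflow_add flip: matrix_mul_assoc)
  also have "\<dots> = m ** aflow (t + s)" by (simp add: add.commute)
  also have "\<dots> = m ** aflow t ** aflow s" by (simp add: aflow_add flip: matrix_mul_assoc)
  also have "\<dots> = aflow t ** l" using m(2) mc[of t] by (simp add: matrix_mul_assoc)
  finally show "l ** aflow t = aflow t ** l" .
qed

lemma MA_comm:
  assumes "l \<in> MAgrp"
  shows "l ** Pp = Pp ** l" "l ** P0 = P0 ** l" "l ** Pm = Pm ** l"
  using bdiag_comm[OF comm_bdiag[OF MA_props(2)[OF assms]]] by simp_all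

lemma prod_blocks:
  fixes X Y A B :: "('n::finite) mat"
  shows "A ** (X ** Y) ** B = (A ** X ** Pp) ** (Pp ** Y ** B) + (A ** X ** P0) ** (P0 ** Y ** B) + (A ** X ** Pm) ** (Pm ** Y ** B)"
proof -
  have "X ** Y = X ** (Pp ** Pp + P0 ** P0 + Pm ** Pm) ** Y" by (simp add: Pprod Psum)
  thus ?thesis by (simp add: matrix_add_ldistrib matrix_add_rdistrib matrix_mul_assoc)
qed

lemma lowU_mult: "lowU X \<Longrightarrow> lowU Y \<Longrightarrow> lowU (X ** Y)"
  unfolding lowU_def by (simp add: prod_blocks Pprod)

lemma uppU_mult: "uppU X \<Longrightarrow> uppU Y \<Longrightarrow> uppU (X ** Y)"
  unfolding uppU_def by (simp add: prod_blocks Pprod)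

lemma JP2: "Pp ** lorentzJ = lorentzJ ** Pm" "Pm ** lorentzJ = lorentzJ ** Pp" "P0 ** lorentzJ = lorentzJ ** P0"
  by (metis JP(2), metis JP(1), metis JP(3))

lemma linv_block:
  fixes X A B QA QB :: "('n::finite) mat"
  assumes "A ** lorentzJ = lorentzJ ** QA" "lorentzJ ** B = QB ** lorentzJ" "transpose QA = QA" "transpose QB = QB"
  shows "A ** linv X ** B = lorentzJ ** transpose (QB ** X ** QA) ** lorentzJ"
proof -
  have "A ** linv X ** B = (A ** lorentzJ) ** transpose X ** (lorentzJ ** B)"
    by (simp add: linv_def matrix_mul_assoc)
  also have "\<dots> = lorentzJ ** (QA ** transpose X ** QB) ** lorentzJ"
    by (simp add: assms(1,2) matrix_mul_assoc)
  also have "QA ** transpose X ** QB = transpose (QB ** X ** QA)"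
    by (simp add: matrix_transpose_mul assms(3,4) matrix_mul_assoc)
  finally show ?thesis .
qed

lemmas lb = linv_block[OF JP2(1) JP(2)] linv_block[OF JP2(1) JP(1)] linv_block[OF JP2(1) JP(3)]
  linv_block[OF JP2(2) JP(2)] linv_block[OF JP2(2) JP(1)] linv_block[OF JP2(2) JP(3)]
  linv_block[OF JP2(3) JP(2)] linv_block[OF JP2(3) JP(1)] linv_block[OF JP2(3) JP(3)]

lemma JJ_right: "(Y :: ('n::finite) mat) ** lorentzJ ** lorentzJ = Y"
  by (simp add: JP flip: matrix_mul_assoc)

lemma transpose_zero_mat: "transpose (0 :: real^'n^'m) = 0"
  by (simp add: transpose_def vec_eq_iff)

lemma lowU_linv: "lowU X \<Longrightarrow> lowU (linv X)"
  unfolding lowU_def by (simp add: lb JP JJ_right transpose_zero_mat)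

lemma uppU_linv: "uppU X \<Longrightarrow> uppU (linv X)"
  unfolding uppU_def by (simp add: lb JP JJ_right transpose_zero_mat)

lemma MA_bdiag: "l \<in> MAgrp \<Longrightarrow> bdiag l"
  by (rule comm_bdiag[OF MA_props(2)])

lemma bdiag_D: "bdiag X \<Longrightarrow> X = D X"
  using X_expand[of X] by (simp add: bdiag_def D_def)

lemma Ngrp_Gd: "n \<in> Ngrp \<Longrightarrow> n \<in> Gd" by (simp add: Ngrp_def)
lemma Ugrp_Gd: "u \<in> Ugrp \<Longrightarrow> u \<in> Gd" by (simp add: Ugrp_def)

lemma diag_eq:
  assumes n: "lowU n" and u: "uppU u" and l1: "bdiag l1" and l2: "bdiag l2" and e: "n ** l1 = l2 ** u"
  shows "l1 = l2"
proof -
  have "Pp ** (n ** l1) ** Pp = Pp ** (l2 ** u) ** Pp" "P0 ** (n ** l1) ** P0 = P0 ** (l2 ** u) ** P0"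
    "Pm ** (n ** l1) ** Pm = Pm ** (l2 ** u) ** Pm" using e by simp_all
  hence "Pp ** l1 ** Pp = Pp ** l2 ** Pp" "P0 ** l1 ** P0 = P0 ** l2 ** P0" "Pm ** l1 ** Pm = Pm ** l2 ** Pm"
    using n u l1 l2 unfolding lowU_def uppU_def bdiag_def prod_blocks
    by (simp_all add: matrix_mul_assoc Pprod)
  hence "D l1 = D l2" by (simp add: D_def)
  thus ?thesis using bdiag_D l1 l2 by metis
qed

lemma NMAU_unique:
  assumes n1: "n1 \<in> Ngrp" and n2: "n2 \<in> Ngrp" and u1: "u1 \<in> Ugrp" and u2: "u2 \<in> Ugrp"
    and l1: "l1 \<in> MAgrp" and l2: "l2 \<in> MAgrp" and e: "n1 ** l1 ** u1 = n2 ** l2 ** u2"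
  shows "l1 = l2"
proof -
  have ln2: "lor n2" and lu1: "lor u1" using n2 u1 Ngrp_Gd Ugrp_Gd Gd_lor by blast+
  have "linv n2 ** (n1 ** l1 ** u1) ** linv u1 = (linv n2 ** n1) ** l1"
    using linv_right[OF lu1] by (simp add: matrix_mul_assoc flip: matrix_mul_assoc[of _ u1])
  moreover have "linv n2 ** (n2 ** l2 ** u2) ** linv u1 = l2 ** (u2 ** linv u1)"
    using linv_left[OF ln2] by (simp add: matrix_mul_assoc)
  ultimately have "(linv n2 ** n1) ** l1 = l2 ** (u2 ** linv u1)" using e by simp
  moreover have "lowU (linv n2 ** n1)"
    by (intro lowU_mult lowU_linv Ngrp_lowU n1 n2)
  moreover have "uppU (u2 ** linv u1)"
    by (intro uppU_mult uppU_linv Ugrp_uppU u1 u2)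
  ultimately show ?thesis using diag_eq MA_bdiag l1 l2 by blast
qed

lemma delta_eq:
  assumes n: "n \<in> Ngrp" and u: "u \<in> Ugrp" and l: "l \<in> MAgrp"
  shows "delta (n ** l ** u) = l"
proof -
  have "n ** l ** u \<in> NMAU" using n u l by (auto simp: NMAU_def)
  moreover have "(THE l'. l' \<in> MAgrp \<and> (\<exists>n' u'. n' \<in> Ngrp \<and> u' \<in> Ugrp \<and> n ** l ** u = n' ** l' ** u')) = l"
    using n u l NMAU_unique by (intro the_equality) blast+
  ultimately show ?thesis by (simp add: delta_def)
qed




definition nv :: "real^'n \<Rightarrow> ('n::finite) mat" where
"nv v = (\<chi> r c. (if r = c then 1 else 0) + (case r of
    None \<Rightarrow> (case c of None \<Rightarrow> inner v v / 8 | Some None \<Rightarrow> inner v v / 8 | Some (Some j) \<Rightarrow> v$j / 2)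
  | Some None \<Rightarrow> (case c of None \<Rightarrow> - (inner v v / 8) | Some None \<Rightarrow> - (inner v v / 8) | Some (Some j) \<Rightarrow> - (v$j / 2))
  | Some (Some i) \<Rightarrow> (case c of None \<Rightarrow> v$i/2 | Some None \<Rightarrow> v$i/2 | Some (Some j) \<Rightarrow> 0)))"

lemma nv_simps[simp]:
  "nv v $ None $ None = 1 + inner v v / 8" "nv v $ None $ Some None = inner v v / 8"
  "nv v $ None $ Some (Some j) = v$j / 2"
  "nv v $ Some None $ None = - (inner v v / 8)" "nv v $ Some None $ Some None = 1 - inner v v / 8"
  "nv v $ Some None $ Some (Some j) = - (v$j / 2)"
  "nv v $ Some (Some i) $ None = v$i / 2" "nv v $ Some (Some i) $ Some None = v$i / 2"
  "nv v $ Some (Some i) $ Some (Some j) = (if i = j then 1 else 0)"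
  by (simp_all add: nv_def)

lemma inner_sum: "inner (v::real^'n) w = (\<Sum>i\<in>UNIV. v$i * w$i)"
  by (simp add: inner_vec_def)

lemma delta_sums[simp]:
  fixes f :: "'a::finite \<Rightarrow> real"
  shows "(\<Sum>i\<in>UNIV. (if i = k then 1 else 0) * f i) = f k"
    "(\<Sum>i\<in>UNIV. (if k = i then 1 else 0) * f i) = f k"
    "(\<Sum>i\<in>UNIV. f i * (if i = k then 1 else 0)) = f k"
    "(\<Sum>i\<in>UNIV. f i * (if k = i then 1 else 0)) = f k"
  by (simp_all add: if_distrib if_distribR sum.delta sum.delta' cong: if_cong)

lemma lor_nv: "lor (nv (v::real^('n::finite)))"
  unfolding lor_def
  apply (simp add: mcomp transpose_def inner_sum sum_divide_distrib[symmetric] algebra_simps)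
  apply (simp add: field_simps)
  done

lemma continuous_on_vnth:
  fixes f :: "'a::topological_space \<Rightarrow> real^'n"
  shows "continuous_on S f \<Longrightarrow> continuous_on S (\<lambda>x. f x $ j)"
  unfolding continuous_on_def by (auto intro!: tendsto_vec_nth)

lemma continuous_nv:
  fixes f :: "'a::topological_space \<Rightarrow> real^('n::finite)"
  assumes f: "continuous_on S f"
  shows "continuous_on S (\<lambda>x. nv (f x))"
proof -
  have "\<forall>r c. continuous_on S (\<lambda>x. nv (f x) $ r $ c)"
    by (simp add: all_opt2) (auto intro!: continuous_intros continuous_on_vnth f)
  hence h: "continuous_on S (\<lambda>x. nv (f x) $ r $ c)" for r c by blast
  have eq: "(\<lambda>x. nv (f x)) = (\<lambda>x. \<chi> r. \<chi> c. nv (f x) $ r $ c)" by simp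
  show ?thesis
    apply (subst eq)
    apply (rule continuous_on_vec_lambda)+
    by (rule h)
qed

lemma lowU_nv: "lowU (nv v)"
  unfolding lowU_def by (simp add: mcomp) (simp add: field_simps)

lemma lowU_lim:
  fixes X :: "('n::finite) mat"
  assumes "lowU X"
  shows "((\<lambda>t. aflow t ** X ** aflow (- t)) \<longlongrightarrow> mat 1) at_top"
proof -
  have D: "D X = mat 1" using assms Psum by (simp add: lowU_def D_def algebra_simps)
  have e: "aflow t ** X ** aflow (- t) = mat 1 + exp (- (1 * t)) *\<^sub>R (P0 ** X ** Pp + Pm ** X ** P0)
     + exp (- (2 * t)) *\<^sub>R (Pm ** X ** Pp)" for t
    using assms by (simp add: conj_expand D lowU_def)
  have l1: "((\<lambda>t::real. exp (- (1 * t))) \<longlongrightarrow> 0) at_top" by (rule exp_neg_lim) simp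
  have l2: "((\<lambda>t::real. exp (- (2 * t))) \<longlongrightarrow> 0) at_top" by (rule exp_neg_lim) simp
  have "((\<lambda>t. mat 1 + exp (- (1 * t)) *\<^sub>R (P0 ** X ** Pp + Pm ** X ** P0)
     + exp (- (2 * t)) *\<^sub>R (Pm ** X ** Pp)) \<longlongrightarrow> mat 1 + 0 *\<^sub>R (P0 ** X ** Pp + Pm ** X ** P0)
     + 0 *\<^sub>R (Pm ** X ** Pp)) at_top"
    by (intro tendsto_intros l1 l2)
  thus ?thesis unfolding e by simp
qed

lemma Ngrp_I: "X \<in> Gd \<Longrightarrow> lowU X \<Longrightarrow> X \<in> Ngrp"
  by (simp add: Ngrp_def lowU_lim)

lemma nv_zero: "nv 0 = mat 1"
  by (simp add: mcomp)

lemma Gd_nv: "nv v \<in> Gd"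
proof -
  have "det (nv (1 *\<^sub>R v)) = 1"
    by (rule det_path[where f = "\<lambda>s. nv (s *\<^sub>R v)"])
       (auto simp: lor_nv nv_zero intro!: continuous_nv continuous_intros)
  moreover have "nv v $ None $ None > 0" by (simp add: add_pos_nonneg)
  ultimately show ?thesis using lor_nv[of v] by (simp add: Gd_def lor_def)
qed

lemma Ngrp_nv: "nv v \<in> Ngrp"
  by (simp add: Ngrp_I Gd_nv lowU_nv)




definition zz :: "('n::finite) mat \<Rightarrow> real^'n idx" where
  "zz X = (\<chi> k. X$k$None + X$k$Some None)"
definition az :: "('n::finite) mat \<Rightarrow> real" where
  "az X = (X$None$None + X$None$Some None + X$Some None$None + X$Some None$Some None) / 2"
definition ww :: "('n::finite) mat \<Rightarrow> real^'n" where
  "ww X = (\<chi> i. X$Some (Some i)$None + X$Some (Some i)$Some None)"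
definition vX :: "('n::finite) mat \<Rightarrow> real^'n" where
  "vX X = (- (1 / az X)) *\<^sub>R ww X"

lemma crit1:
  fixes Y :: "('n::finite) mat"
  shows "(\<forall>i. Y$Some (Some i)$None + Y$Some (Some i)$Some None = 0) \<Longrightarrow> P0 ** Y ** Pp = 0"
  by (simp add: mcomp) (simp add: field_simps)

lemma crit2:
  fixes Y :: "('n::finite) mat"
  shows "Y$None$None + Y$None$Some None = Y$Some None$None + Y$Some None$Some None \<Longrightarrow> Pm ** Y ** Pp = 0"
  by (simp add: mcomp) (simp add: field_simps)

lemma rowsum: "(A ** B)$r$None + (A ** B)$r$Some None = (\<Sum>k\<in>UNIV. A$r$k * (B$k$None + B$k$Some None))"
  by (simp add: mmult_nth sum.distrib distrib_left)

lemma null_vec: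
  fixes X :: "('n::finite) mat"
  assumes "lor X"
  shows "(X$Some None$None + X$Some None$Some None)^2 + inner (ww X) (ww X) = (X$None$None + X$None$Some None)^2"
proof -
  have J: "transpose X ** lorentzJ ** X = lorentzJ" using assms by (simp add: lor_def)
  have "(transpose X ** lorentzJ ** X)$None$None + (transpose X ** lorentzJ ** X)$None$Some None
     + (transpose X ** lorentzJ ** X)$Some None$None + (transpose X ** lorentzJ ** X)$Some None$Some None = 0"
    by (simp add: J)
  hence e: "- (X$None$None * X$None$None) + X$Some None$None * X$Some None$None + (\<Sum>i\<in>UNIV. X$Some (Some i)$None * X$Some (Some i)$None)
     + (- (X$None$None * X$None$Some None) + X$Some None$None * X$Some None$Some None + (\<Sum>i\<in>UNIV. X$Some (Some i)$None * X$Some (Some i)$Some None))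
     + (- (X$None$Some None * X$None$None) + X$Some None$Some None * X$Some None$None + (\<Sum>i\<in>UNIV. X$Some (Some i)$Some None * X$Some (Some i)$None))
     + (- (X$None$Some None * X$None$Some None) + X$Some None$Some None * X$Some None$Some None + (\<Sum>i\<in>UNIV. X$Some (Some i)$Some None * X$Some (Some i)$Some None)) = 0"
    by (simp add: mmult_nth sum_opt2 transpose_def)
  have s: "inner (ww X) (ww X) = (\<Sum>i\<in>UNIV. X$Some (Some i)$None * X$Some (Some i)$None)
     + (\<Sum>i\<in>UNIV. X$Some (Some i)$None * X$Some (Some i)$Some None)
     + (\<Sum>i\<in>UNIV. X$Some (Some i)$Some None * X$Some (Some i)$None)
     + (\<Sum>i\<in>UNIV. X$Some (Some i)$Some None * X$Some (Some i)$Some None)"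
    by (simp add: ww_def inner_sum algebra_simps sum.distrib sum_distrib_left)
  show ?thesis using e s by (simp add: power2_eq_square algebra_simps)
qed

lemma nvX_blocks:
  fixes X :: "('n::finite) mat"
  assumes l: "lor X" and a: "az X \<noteq> 0"
  shows "P0 ** (nv (vX X) ** X) ** Pp = 0 \<and> Pm ** (nv (vX X) ** X) ** Pp = 0"
proof -
  define W where "W = inner (ww X) (ww X)"
  define zp where "zp = X$None$None + X$None$Some None"
  define zq where "zq = X$Some None$None + X$Some None$Some None"
  have azd: "az X = (zp + zq) / 2" by (simp add: az_def zp_def zq_def)
  have nl: "zq^2 + W = zp^2" using null_vec[OF l] by (simp add: W_def zp_def zq_def)
  have hv: "inner (vX X) (vX X) = W / (az X)^2"
    by (simp add: vX_def W_def power2_eq_square)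
  have hs: "(\<Sum>i\<in>UNIV. vX X $ i / 2 * (X$Some (Some i)$None + X$Some (Some i)$Some None)) = - W / (2 * az X)"
  proof -
    have "(\<Sum>i\<in>UNIV. vX X $ i / 2 * (X$Some (Some i)$None + X$Some (Some i)$Some None))
       = (- 1 / (2 * az X)) * (\<Sum>i\<in>UNIV. ww X $ i * ww X $ i)"
      by (simp add: vX_def ww_def sum_distrib_left) (simp add: field_simps)
    thus ?thesis by (simp add: W_def inner_sum)
  qed
  have r1: "\<forall>i. (nv (vX X) ** X)$Some (Some i)$None + (nv (vX X) ** X)$Some (Some i)$Some None = 0"
  proof
    fix i
    have "(nv (vX X) ** X)$Some (Some i)$None + (nv (vX X) ** X)$Some (Some i)$Some None
       = vX X $ i * az X + ww X $ i"
      by (simp add: rowsum sum_opt2 az_def ww_def) (simp add: field_simps)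
    also have "\<dots> = 0" using a by (simp add: vX_def)
    finally show "(nv (vX X) ** X)$Some (Some i)$None + (nv (vX X) ** X)$Some (Some i)$Some None = 0" .
  qed
  define S where "S = (\<Sum>i\<in>UNIV. vX X $ i / 2 * (X$Some (Some i)$None + X$Some (Some i)$Some None))"
  have rp: "(nv (vX X) ** X)$None$None + (nv (vX X) ** X)$None$Some None
      = (1 + inner (vX X) (vX X) / 8) * zp + inner (vX X) (vX X) / 8 * zq + S"
    by (simp add: rowsum sum_opt2 zp_def zq_def S_def algebra_simps)
  have rq: "(nv (vX X) ** X)$Some None$None + (nv (vX X) ** X)$Some None$Some None
      = - (inner (vX X) (vX X) / 8) * zp + (1 - inner (vX X) (vX X) / 8) * zq - S"
    by (simp add: rowsum sum_opt2 zp_def zq_def S_def algebra_simps flip: sum.distrib)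
  have "(nv (vX X) ** X)$None$None + (nv (vX X) ** X)$None$Some None
      - ((nv (vX X) ** X)$Some None$None + (nv (vX X) ** X)$Some None$Some None)
      = zp - zq + inner (vX X) (vX X) / 4 * (zp + zq) + 2 * S"
    unfolding rp rq by (simp add: algebra_simps)
  also have "\<dots> = zp - zq + W / (az X)^2 / 4 * (zp + zq) - W / az X"
  proof -
    have "S = - W / (2 * az X)" using hs by (simp only: S_def)
    thus ?thesis by (simp add: hv)
  qed
  also have "\<dots> = 0"
  proof -
    have "zp + zq \<noteq> 0" using a azd by simp
    have e1g: "\<And>s::real. s \<noteq> 0 \<Longrightarrow> W / (s / 2)^2 / 4 * s = W / s"
      by (simp add: power2_eq_square field_simps)
    have e1: "W / ((zp + zq) / 2)^2 / 4 * (zp + zq) = W / (zp + zq)"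
      using e1g \<open>zp + zq \<noteq> 0\<close> by blast
    have e2: "W / ((zp + zq) / 2) = 2 * W / (zp + zq)"
      using \<open>zp + zq \<noteq> 0\<close> by (simp add: field_simps)
    have e3: "zp - zq = W / (zp + zq)"
      using \<open>zp + zq \<noteq> 0\<close> nl by (simp add: field_simps power2_eq_square)
    have "zp - zq + W / ((zp + zq) / 2)^2 / 4 * (zp + zq) - W / ((zp + zq) / 2) = 0"
      unfolding e1 e2 e3 by (simp add: field_simps)
    thus ?thesis unfolding azd .
  qed
  finally show ?thesis using crit1[OF r1] crit2 by simp
qed




lemma PpXPp: "Pp ** X ** Pp = az X *\<^sub>R (Pp :: ('n::finite) mat)"
  by (simp add: mcomp az_def) (simp add: field_simps)

lemma Pp_nz: "(Pp :: ('n::finite) mat) \<noteq> 0"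
proof
  assume "(Pp :: ('n::finite) mat) = 0"
  hence "(Pp :: ('n::finite) mat) $ None $ None = 0" by simp
  thus False by simp
qed

lemma Y_Pp:
  fixes Y :: "('n::finite) mat"
  assumes "P0 ** Y ** Pp = 0" "Pm ** Y ** Pp = 0"
  shows "Y ** Pp = Pp ** Y ** Pp"
proof -
  have "Y ** Pp = (Pp + P0 + Pm) ** Y ** Pp" by (simp add: Psum)
  thus ?thesis using assms by (simp add: matrix_add_rdistrib)
qed

lemma lorentz_block:
  fixes Y :: "('n::finite) mat"
  assumes l: "lor Y" and b: "P0 ** Y ** Pp = 0" "Pm ** Y ** Pp = 0" and c: "Pp ** Y ** Pp = c *\<^sub>R Pp" and c0: "c \<noteq> 0"
  shows "Pm ** Y ** P0 = 0"
proof -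
  have YP: "Y ** Pp = c *\<^sub>R Pp" using Y_Pp[OF b] c by simp
  have "P0 ** (transpose Y ** lorentzJ ** Y) ** Pp = P0 ** lorentzJ ** Pp" using l by (simp add: lor_def)
  also have "\<dots> = 0" by (simp add: JP2(3) Pprod flip: matrix_mul_assoc)
  finally have "P0 ** transpose Y ** lorentzJ ** (Y ** Pp) = 0" by (simp add: matrix_mul_assoc)
  hence "c *\<^sub>R (P0 ** transpose Y ** lorentzJ ** Pp) = 0" by (simp add: YP matrix_scalar_ac flip: scalar_matrix_assoc)
  hence "P0 ** transpose Y ** lorentzJ ** Pp = 0" using c0 by simp
  hence "P0 ** transpose Y ** (Pm ** lorentzJ) = 0" by (simp add: JP flip: matrix_mul_assoc)
  hence "P0 ** transpose Y ** Pm ** lorentzJ ** lorentzJ = 0" by (simp add: matrix_mul_assoc)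
  hence "P0 ** transpose Y ** Pm = 0" by (simp add: JJ_right)
  hence "transpose (P0 ** transpose Y ** Pm) = 0" by (simp add: transpose_zero_mat)
  thus ?thesis by (simp add: matrix_transpose_mul matrix_mul_assoc)
qed

lemma tendsto_mmult:
  fixes f g :: "'a \<Rightarrow> real^'n^'n"
  assumes "(f \<longlongrightarrow> a) F" "(g \<longlongrightarrow> b) F"
  shows "((\<lambda>x. f x ** g x) \<longlongrightarrow> a ** b) F"
proof -
  have "((\<lambda>x. \<chi> i j. \<Sum>k\<in>UNIV. f x $ i $ k * g x $ k $ j) \<longlongrightarrow> (\<chi> i j. \<Sum>k\<in>UNIV. a $ i $ k * b $ k $ j)) F"
    by (intro tendsto_vec_lambda tendsto_sum tendsto_mult tendsto_vec_nth assms)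
  thus ?thesis by (simp add: matrix_matrix_mult_def)
qed

lemma lowU_Pp: "lowU n \<Longrightarrow> Pp ** n = (Pp :: ('n::finite) mat)"
proof -
  assume h: "lowU n"
  have "Pp ** n = Pp ** n ** (Pp + P0 + Pm)" by (simp add: Psum)
  thus ?thesis using h by (simp add: lowU_def matrix_add_ldistrib)
qed

lemma uppU_Pp: "uppU u \<Longrightarrow> u ** Pp = (Pp :: ('n::finite) mat)"
proof -
  assume h: "uppU u"
  have "u ** Pp = (Pp + P0 + Pm) ** u ** Pp" by (simp add: Psum)
  thus ?thesis using h by (simp add: uppU_def matrix_add_rdistrib)
qed

lemma all_zero_one:
  fixes X :: "('n::finite) mat"
  assumes "lowU X" "P0 ** X ** Pp = 0" "Pm ** X ** Pp = 0" "Pm ** X ** P0 = 0"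
  shows "X = mat 1"
proof -
  have "X = P0 + Pp + Pm" using X_expand[of X] assms by (simp add: lowU_def)
  thus ?thesis using Psum by (simp add: algebra_simps)
qed

lemma cancel_right_Gd:
  fixes A :: "('n::finite) mat"
  assumes "A ** l = 0" "l \<in> Gd"
  shows "A = 0"
proof -
  have "A = A ** (l ** linv l)" using linv_right[OF Gd_lor[OF assms(2)]] by simp
  also have "\<dots> = 0" using assms(1) by (simp add: matrix_mul_assoc)
  finally show ?thesis .
qed

lemma limit_ident:
  assumes n: "n \<in> Ngrp" and l: "l \<in> MAgrp" and u: "u \<in> Ugrp"
  shows "az (n ** l ** u) \<noteq> 0" "D (nv (vX (n ** l ** u)) ** (n ** l ** u)) = l"
proof -
  let ?t = "n ** l ** u"
  have lG: "l \<in> Gd" using l MA_props by blast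
  have tG: "?t \<in> Gd" using n u lG Ngrp_Gd Ugrp_Gd Gd_mult by blast
  have Ppn: "Pp ** n = Pp" by (rule lowU_Pp[OF Ngrp_lowU[OF n]])
  have uPp: "u ** Pp = Pp" by (rule uppU_Pp[OF Ugrp_uppU[OF u]])
  note lc = MA_comm[OF l]
  have "Pp ** ?t ** Pp = Pp ** n ** l ** (u ** Pp)" by (simp add: matrix_mul_assoc)
  also have "\<dots> = Pp ** l ** Pp" using Ppn uPp by simp
  also have "\<dots> = Pp ** Pp ** l" by (metis matrix_mul_assoc lc(1))
  also have "\<dots> = l ** Pp" by (simp add: Pprod lc(1))
  finally have tP: "az ?t *\<^sub>R Pp = l ** Pp" by (simp add: PpXPp)
  show az: "az ?t \<noteq> 0"
  proof
    assume "az ?t = 0"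
    hence "l ** Pp = 0" using tP by simp
    hence "Pp ** l = 0" using lc by simp
    thus False using cancel_right_Gd[OF _ lG] Pp_nz by blast
  qed
  define \<mu> where "\<mu> = nv (vX ?t) ** n"
  have low: "lowU \<mu>" unfolding \<mu>_def by (intro lowU_mult lowU_nv Ngrp_lowU n)
  have lorm: "lor \<mu>" unfolding \<mu>_def using Gd_nv n Ngrp_Gd Gd_mult Gd_lor by blast
  have Yeq: "nv (vX ?t) ** ?t = \<mu> ** l ** u" by (simp add: \<mu>_def matrix_mul_assoc)
  have bl: "P0 ** (\<mu> ** l ** u) ** Pp = 0" "Pm ** (\<mu> ** l ** u) ** Pp = 0"
    using nvX_blocks[OF Gd_lor[OF tG] az] Yeq by simp_all
  have YP: "A ** (\<mu> ** l ** u) ** Pp = (A ** \<mu> ** Pp) ** l" for A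
  proof -
    have "A ** (\<mu> ** l ** u) ** Pp = A ** \<mu> ** l ** (u ** Pp)" by (simp add: matrix_mul_assoc)
    also have "\<dots> = A ** \<mu> ** (l ** Pp)" using uPp by (simp add: matrix_mul_assoc)
    also have "\<dots> = (A ** \<mu> ** Pp) ** l" using lc by (simp add: matrix_mul_assoc)
    finally show ?thesis .
  qed
  have b0: "P0 ** \<mu> ** Pp = 0" using bl(1) YP[of P0] cancel_right_Gd[OF _ lG] by simp
  have bm: "Pm ** \<mu> ** Pp = 0" using bl(2) YP[of Pm] cancel_right_Gd[OF _ lG] by simp
  have bmo: "Pm ** \<mu> ** P0 = 0"
    using lorentz_block[OF lorm b0 bm, of 1] low by (simp add: lowU_def)
  have "\<mu> = mat 1" by (rule all_zero_one[OF low b0 bm bmo])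
  hence Y: "nv (vX ?t) ** ?t = l ** u" using Yeq by simp
  have uu: "Pp ** u ** Pp = Pp" "P0 ** u ** P0 = P0" "Pm ** u ** Pm = Pm"
    using Ugrp_uppU[OF u] by (simp_all add: uppU_def)
  have dd: "A ** (l ** u) ** A = l ** (A ** u ** A)" if "A ** l = l ** A" for A
    using that by (simp add: matrix_mul_assoc)
  have "D (l ** u) = l ** (P0 + Pp + Pm)"
    unfolding D_def using lc by (simp add: dd uu matrix_add_ldistrib)
  moreover have "P0 + Pp + Pm = (mat 1 :: ('a::finite) mat)" using Psum by (simp add: algebra_simps)
  ultimately show "D (nv (vX ?t) ** ?t) = l" using Y by simp
qed




lemma tendsto_az: "(X \<longlongrightarrow> th) F \<Longrightarrow> ((\<lambda>k. az (X k)) \<longlongrightarrow> az th) F"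
  unfolding az_def by (intro tendsto_intros) auto

lemma tendsto_ww: "(X \<longlongrightarrow> th) F \<Longrightarrow> ((\<lambda>k. ww (X k)) \<longlongrightarrow> ww th) F"
  unfolding ww_def by (intro tendsto_intros)

lemma tendsto_vX: "(X \<longlongrightarrow> th) F \<Longrightarrow> az th \<noteq> 0 \<Longrightarrow> ((\<lambda>k. vX (X k)) \<longlongrightarrow> vX th) F"
  unfolding vX_def by (intro tendsto_intros tendsto_az tendsto_ww) auto

lemma tendsto_nv: fixes v :: "real^('n::finite)" shows "(f \<longlongrightarrow> v) F \<Longrightarrow> ((\<lambda>k. nv (f k)) \<longlongrightarrow> nv v) F"
proof -
  assume f: "(f \<longlongrightarrow> v) F"
  have "continuous_on UNIV (\<lambda>x::real^'n. nv x)" by (rule continuous_nv) (rule continuous_on_id)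
  hence "isCont nv v" by (simp add: continuous_on_eq_continuous_at)
  thus ?thesis using f isCont_tendsto_compose by blast
qed

lemma tendsto_D: "(X \<longlongrightarrow> Y) F \<Longrightarrow> ((\<lambda>k. D (X k)) \<longlongrightarrow> D Y) F"
  unfolding D_def by (intro tendsto_add tendsto_mmult tendsto_const)

lemma conv_main:
  fixes X :: "nat \<Rightarrow> ('n::finite) mat"
  assumes X: "X \<longlonglongrightarrow> n ** l ** u" and XG: "\<And>k. lor (X k)"
    and n: "n \<in> Ngrp" and l: "l \<in> MAgrp" and u: "u \<in> Ugrp"
    and T: "filterlim T at_top sequentially"
  shows "(\<lambda>k. aflow (- T k) ** (nv (vX (X k)) ** X k) ** aflow (T k)) \<longlonglongrightarrow> l"
proof -
  let ?t = "n ** l ** u"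
  let ?Y = "\<lambda>k. nv (vX (X k)) ** X k"
  have az: "az ?t \<noteq> 0" and Dl: "D (nv (vX ?t) ** ?t) = l" using limit_ident[OF n l u] by blast+
  have Ylim: "?Y \<longlonglongrightarrow> nv (vX ?t) ** ?t"
    by (intro tendsto_mmult tendsto_nv tendsto_vX X az)
  have "eventually (\<lambda>k. az (X k) \<noteq> 0) sequentially"
    using tendsto_az[OF X] az by (rule tendsto_imp_eventually_ne)
  hence ev: "eventually (\<lambda>k. aflow (- T k) ** ?Y k ** aflow (T k) =
     D (?Y k) + exp (- (1 * T k)) *\<^sub>R (P0 ** ?Y k ** Pm + Pp ** ?Y k ** P0) + exp (- (2 * T k)) *\<^sub>R (Pp ** ?Y k ** Pm)) sequentially"
  proof (rule eventually_mono)
    fix k assume a: "az (X k) \<noteq> 0"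
    have b: "P0 ** ?Y k ** Pp = 0" "Pm ** ?Y k ** Pp = 0" using nvX_blocks[OF XG a] by simp_all
    have lY: "lor (?Y k)" using lor_mult[OF lor_nv XG] by blast
    have "Pp ** ?Y k ** Pp = Pp ** X k ** Pp" by (simp add: matrix_mul_assoc lowU_Pp[OF lowU_nv])
    hence c: "Pp ** ?Y k ** Pp = az (X k) *\<^sub>R Pp" by (simp add: PpXPp)
    have "Pm ** ?Y k ** P0 = 0" by (rule lorentz_block[OF lY b c a])
    thus "aflow (- T k) ** ?Y k ** aflow (T k) =
     D (?Y k) + exp (- (1 * T k)) *\<^sub>R (P0 ** ?Y k ** Pm + Pp ** ?Y k ** P0) + exp (- (2 * T k)) *\<^sub>R (Pp ** ?Y k ** Pm)"
      using b by (simp add: conj_expand')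
  qed
  have e1: "(\<lambda>k. exp (- (1 * T k))) \<longlonglongrightarrow> 0"
    by (rule filterlim_compose[OF exp_neg_lim T]) simp
  have e2: "(\<lambda>k. exp (- (2 * T k))) \<longlonglongrightarrow> 0"
    by (rule filterlim_compose[OF exp_neg_lim T]) simp
  have "(\<lambda>k. D (?Y k) + exp (- (1 * T k)) *\<^sub>R (P0 ** ?Y k ** Pm + Pp ** ?Y k ** P0) + exp (- (2 * T k)) *\<^sub>R (Pp ** ?Y k ** Pm))
     \<longlonglongrightarrow> D (nv (vX ?t) ** ?t) + 0 *\<^sub>R (P0 ** (nv (vX ?t) ** ?t) ** Pm + Pp ** (nv (vX ?t) ** ?t) ** P0)
        + 0 *\<^sub>R (Pp ** (nv (vX ?t) ** ?t) ** Pm)"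
    by (intro tendsto_add tendsto_scaleR tendsto_D Ylim e1 e2 tendsto_mmult tendsto_const)
  hence "(\<lambda>k. D (?Y k) + exp (- (1 * T k)) *\<^sub>R (P0 ** ?Y k ** Pm + Pp ** ?Y k ** P0) + exp (- (2 * T k)) *\<^sub>R (Pp ** ?Y k ** Pm))
     \<longlonglongrightarrow> l" using Dl by simp
  thus ?thesis using tendsto_cong[OF ev] by blast
qed



lemma gcoset_mult:
  assumes H: "is_subgroup H" and g: "\<gamma> \<in> H"
  shows "gcoset (x ** \<gamma>) H = gcoset x H"
proof
  show "gcoset (x ** \<gamma>) H \<subseteq> gcoset x H"
    using H g by (auto simp: gcoset_def is_subgroup_def matrix_mul_assoc[symmetric] intro!: image_eqI)
  show "gcoset x H \<subseteq> gcoset (x ** \<gamma>) H"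
  proof
    fix y assume "y \<in> gcoset x H"
    then obtain h where h: "h \<in> H" "y = x ** h" by (auto simp: gcoset_def)
    have gG: "\<gamma> \<in> Gd" using H g by (auto simp: is_subgroup_def)
    have "x ** \<gamma> ** (matrix_inv \<gamma> ** h) = x ** (\<gamma> ** matrix_inv \<gamma>) ** h"
      by (simp add: matrix_mul_assoc)
    hence "y = x ** \<gamma> ** (matrix_inv \<gamma> ** h)"
      using h Gd_inv_right[OF gG] by simp
    moreover have "matrix_inv \<gamma> ** h \<in> H" using H g h by (auto simp: is_subgroup_def)
    ultimately show "y \<in> gcoset (x ** \<gamma>) H" by (auto simp: gcoset_def)
  qed
qed

lemma gcoset_self: "is_subgroup H \<Longrightarrow> x \<in> gcoset x H"
  unfolding gcoset_def is_subgroup_def by (auto intro!: image_eqI[where x = "mat 1"])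

lemma gcoset_eq: "is_subgroup H \<Longrightarrow> x \<in> gcoset c H \<Longrightarrow> gcoset x H = gcoset c H"
proof -
  assume H: "is_subgroup H" and x: "x \<in> gcoset c H"
  then obtain h where "h \<in> H" "x = c ** h" by (auto simp: gcoset_def)
  thus ?thesis using gcoset_mult[OF H] by simp
qed

lemma Union_quot_Int:
  assumes H: "is_subgroup H" and S: "S \<subseteq> quot_space H" and T: "T \<subseteq> quot_space H"
  shows "\<Union>(S \<inter> T) = \<Union>S \<inter> \<Union>T"
proof
  show "\<Union>(S \<inter> T) \<subseteq> \<Union>S \<inter> \<Union>T" by blast
  show "\<Union>S \<inter> \<Union>T \<subseteq> \<Union>(S \<inter> T)"
  proof
    fix x assume "x \<in> \<Union>S \<inter> \<Union>T"
    then obtain C1 C2 where c: "C1 \<in> S" "C2 \<in> T" "x \<in> C1" "x \<in> C2" by blast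
    obtain g1 where "C1 = gcoset g1 H" using c S by (auto simp: quot_space_def)
    hence "C1 = gcoset x H" using gcoset_eq[OF H] c by simp
    moreover obtain g2 where "C2 = gcoset g2 H" using c T by (auto simp: quot_space_def)
    hence "C2 = gcoset x H" using gcoset_eq[OF H] c by simp
    ultimately show "x \<in> \<Union>(S \<inter> T)" using c by auto
  qed
qed

lemma istop_quot:
  assumes H: "is_subgroup H"
  shows "istopology (\<lambda>S. S \<subseteq> quot_space H \<and> openin (top_of_set Gd) (\<Union>S))"
proof -
  have p1: "S \<inter> T \<subseteq> quot_space H \<and> openin (top_of_set Gd) (\<Union>(S \<inter> T))"
    if "S \<subseteq> quot_space H \<and> openin (top_of_set Gd) (\<Union>S)" "T \<subseteq> quot_space H \<and> openin (top_of_set Gd) (\<Union>T)"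
    for S T :: "'a mat set set"
  proof -
    have "\<Union>(S \<inter> T) = \<Union>S \<inter> \<Union>T" using Union_quot_Int[OF H] that by blast
    thus ?thesis using that by (simp add: openin_Int le_infI1)
  qed
  have p2: "\<Union>K \<subseteq> quot_space H \<and> openin (top_of_set Gd) (\<Union>(\<Union>K))"
    if K: "\<forall>S\<in>K. S \<subseteq> quot_space H \<and> openin (top_of_set Gd) (\<Union>S)" for K :: "'a mat set set set"
  proof -
    have "\<Union>(\<Union>K) = \<Union>((\<lambda>S. \<Union>S) ` K)" by blast
    moreover have "openin (top_of_set Gd) (\<Union>((\<lambda>S. \<Union>S) ` K))" using K by (intro openin_Union) auto
    moreover have "\<Union>K \<subseteq> quot_space H" using K by blast
    ultimately show ?thesis by simp
  qed
  show ?thesis unfolding istopology_def using p1 p2 by blast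
qed

lemma openin_quot:
  "is_subgroup H \<Longrightarrow> openin (quot_top H) S \<longleftrightarrow> S \<subseteq> quot_space H \<and> openin (top_of_set Gd) (\<Union>S)"
proof -
  assume H: "is_subgroup H"
  have "openin (quot_top H) = (\<lambda>S. S \<subseteq> quot_space H \<and> openin (top_of_set Gd) (\<Union>S))"
    unfolding quot_top_def by (rule topology_inverse'[OF istop_quot[OF H]])
  thus ?thesis by simp
qed

lemma Union_quot_space: "is_subgroup H \<Longrightarrow> \<Union>(quot_space H) = Gd"
proof
  assume H: "is_subgroup H"
  show "\<Union>(quot_space H) \<subseteq> Gd" using H Gd_mult by (auto simp: quot_space_def gcoset_def is_subgroup_def)
  show "Gd \<subseteq> \<Union>(quot_space H)" using gcoset_self[OF H] by (auto simp: quot_space_def)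
qed

lemma topspace_quot: "is_subgroup H \<Longrightarrow> topspace (quot_top H) = quot_space H"
proof -
  assume H: "is_subgroup H"
  have "openin (quot_top H) (quot_space H)" using H by (simp add: openin_quot Union_quot_space)
  moreover have "\<And>S. openin (quot_top H) S \<Longrightarrow> S \<subseteq> quot_space H" using H by (simp add: openin_quot)
  ultimately show ?thesis unfolding topspace_def by blast
qed

lemma limitin_quot:
  assumes H: "is_subgroup H" and Z: "Z \<longlonglongrightarrow> z" and ZG: "\<And>k. Z k \<in> Gd" and zG: "z \<in> Gd"
  shows "limitin (quot_top H) (\<lambda>k. gcoset (Z k) H) (gcoset z H) sequentially"
  unfolding limitin_def
proof (intro conjI allI impI)
  show "gcoset z H \<in> topspace (quot_top H)" using H zG by (auto simp: topspace_quot quot_space_def)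
  fix U assume U: "openin (quot_top H) U \<and> gcoset z H \<in> U"
  hence Uq: "U \<subseteq> quot_space H" and Uo: "openin (top_of_set Gd) (\<Union>U)" using openin_quot[OF H] by simp_all
  obtain Ob where O: "open Ob" "\<Union>U = Gd \<inter> Ob" using Uo openin_open by blast
  have "z \<in> \<Union>U" using U gcoset_self[OF H] by blast
  hence "z \<in> Ob" using O by auto
  hence "eventually (\<lambda>k. Z k \<in> Ob) sequentially" by (rule topological_tendstoD[OF Z O(1)])
  thus "eventually (\<lambda>k. gcoset (Z k) H \<in> U) sequentially"
  proof (rule eventually_mono)
    fix k assume "Z k \<in> Ob"
    hence "Z k \<in> \<Union>U" using O ZG by auto
    then obtain C where C: "C \<in> U" "Z k \<in> C" by blast
    obtain c where "C = gcoset c H" using C Uq by (auto simp: quot_space_def)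
    hence "gcoset (Z k) H = C" using gcoset_eq[OF H] C by simp
    thus "gcoset (Z k) H \<in> U" using C by simp
  qed
qed

lemma limitin_closure:
  assumes "limitin X f l sequentially" "\<And>k. f k \<in> S"
  shows "l \<in> X closure_of S"
  unfolding in_closure_of
proof (intro conjI allI impI)
  show "l \<in> topspace X" using assms(1) unfolding limitin_def by blast
  fix T assume "l \<in> T \<and> openin X T"
  hence "eventually (\<lambda>k. f k \<in> T) sequentially" using assms(1) unfolding limitin_def by blast
  then obtain N where "\<forall>n\<ge>N. f n \<in> T" unfolding eventually_sequentially by blast
  hence "f N \<in> T" by simp
  thus "\<exists>y. y \<in> S \<and> y \<in> T" using assms(2)[of N] by blast
qed




lemma P_aflow:
  shows "Pp ** aflow s = exp s *\<^sub>R (Pp :: ('n::finite) mat)" "aflow s ** Pp = exp s *\<^sub>R (Pp :: ('n::finite) mat)"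
    "P0 ** aflow s = (P0 :: ('n::finite) mat)" "aflow s ** P0 = (P0 :: ('n::finite) mat)"
    "Pm ** aflow s = exp (-s) *\<^sub>R (Pm :: ('n::finite) mat)" "aflow s ** Pm = exp (-s) *\<^sub>R (Pm :: ('n::finite) mat)"
  unfolding aflow_eq
  by (simp_all add: matrix_add_ldistrib matrix_add_rdistrib matrix_scalar_ac Pprod flip: scalar_matrix_assoc)

lemma P0_aflow': "P0 ** aflow s = 1 *\<^sub>R (P0 :: ('n::finite) mat)" "aflow s ** P0 = 1 *\<^sub>R (P0 :: ('n::finite) mat)"
  by (simp_all add: P_aflow)

lemma conj_block:
  fixes X A B :: "('n::finite) mat"
  assumes "A ** aflow s = a *\<^sub>R A" "aflow (-s) ** B = b *\<^sub>R B"
  shows "A ** (aflow s ** X ** aflow (-s)) ** B = (a * b) *\<^sub>R (A ** X ** B)"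
proof -
  have "A ** (aflow s ** X ** aflow (-s)) ** B = (A ** aflow s) ** X ** (aflow (-s) ** B)"
    by (simp add: matrix_mul_assoc)
  also have "\<dots> = (a * b) *\<^sub>R (A ** X ** B)"
    by (simp add: assms matrix_scalar_ac flip: scalar_matrix_assoc)
  finally show ?thesis .
qed

lemma lowU_conj: "lowU X \<Longrightarrow> lowU (aflow s ** X ** aflow (-s))"
  unfolding lowU_def
  by (simp add: conj_block[OF P_aflow(1) P0_aflow'(2)] conj_block[OF P_aflow(1) P_aflow(6)]
     conj_block[OF P0_aflow'(1) P_aflow(6)] conj_block[OF P_aflow(1) P_aflow(2)]
     conj_block[OF P0_aflow'(1) P0_aflow'(2)] conj_block[OF P_aflow(5) P_aflow(6)] flip: exp_add)

lemma subgroup_Gd: "is_subgroup H \<Longrightarrow> \<gamma> \<in> H \<Longrightarrow> \<gamma> \<in> Gd"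
  by (auto simp: is_subgroup_def)

lemma core:
  fixes \<Gamma> \<Theta> :: "('n::finite) mat set" and g \<theta> :: "'n mat" and t :: "nat \<Rightarrow> real"
  assumes \<Gamma>: "is_subgroup \<Gamma>" and g: "g \<in> Gd" and t: "filterlim t at_top sequentially"
    and GL: "geometric_limit
           (\<lambda>j. (\<lambda>\<gamma>. aflow (t j) ** g ** \<gamma> ** matrix_inv g ** aflow (- t j)) ` \<Gamma>) \<Theta>"
    and th: "\<theta> \<in> \<Theta>" and thN: "\<theta> \<in> NMAU"
  shows "delta \<theta> \<in> MAgrp \<and> (\<exists>ns. (\<forall>j. ns j \<in> Ngrp) \<and>
            limitin (quot_top \<Gamma>) (\<lambda>j. gcoset (ns j ** g) \<Gamma>)
                    (gcoset (delta \<theta> ** g) \<Gamma>) sequentially)"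
proof -
  obtain n l u where n: "n \<in> Ngrp" and l: "l \<in> MAgrp" and u: "u \<in> Ugrp" and the: "\<theta> = n ** l ** u"
    using thN by (auto simp: NMAU_def)
  have dl: "delta \<theta> = l" using delta_eq[OF n u l] the by simp
  obtain r where r: "strict_mono r" and cc: "chabauty_conv
     ((\<lambda>j. (\<lambda>\<gamma>. aflow (t j) ** g ** \<gamma> ** matrix_inv g ** aflow (- t j)) ` \<Gamma>) \<circ> r) \<Theta>"
    using GL by (auto simp: geometric_limit_def)
  obtain s where s: "\<And>j. s j \<in> (\<lambda>\<gamma>. aflow (t (r j)) ** g ** \<gamma> ** matrix_inv g ** aflow (- t (r j))) ` \<Gamma>"
    and slim: "s \<longlonglongrightarrow> \<theta>"
  proof -
    have "\<exists>s. (\<forall>j. s j \<in> (\<lambda>\<gamma>. aflow (t (r j)) ** g ** \<gamma> ** matrix_inv g ** aflow (- t (r j))) ` \<Gamma>)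
       \<and> s \<longlonglongrightarrow> \<theta>"
    proof -
      have A: "\<forall>h\<in>\<Theta>. \<exists>s. (\<forall>j. s j \<in> (\<lambda>\<gamma>. aflow (t (r j)) ** g ** \<gamma> ** matrix_inv g ** aflow (- t (r j))) ` \<Gamma>)
       \<and> s \<longlonglongrightarrow> h"
        using cc unfolding chabauty_conv_def comp_def by (rule conjunct1)
      from A th show ?thesis by (rule bspec)
    qed
    thus ?thesis using that by blast
  qed
  have "\<forall>j. \<exists>\<gamma>. \<gamma> \<in> \<Gamma> \<and> s j = aflow (t (r j)) ** g ** \<gamma> ** matrix_inv g ** aflow (- t (r j))"
    using s by blast
  then obtain \<gamma> where \<gamma>: "\<And>j. \<gamma> j \<in> \<Gamma>"
    and sj: "\<And>j. s j = aflow (t (r j)) ** g ** \<gamma> j ** matrix_inv g ** aflow (- t (r j))"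
    by metis
  define T where "T = (\<lambda>j. t (r j))"
  have T: "filterlim T at_top sequentially"
    unfolding T_def using filterlim_compose[OF t filterlim_subseq[OF r]] by (simp add: comp_def)
  have gi: "matrix_inv g \<in> Gd" using Gd_matrix_inv[OF g] .
  have sG: "s j \<in> Gd" for j
    unfolding sj using Gd_mult Gd_aflow g gi subgroup_Gd[OF \<Gamma> \<gamma>] by metis
  define \<nu> where "\<nu> = (\<lambda>j. nv (vX (s j)))"
  have conv: "(\<lambda>j. aflow (- T j) ** (\<nu> j ** s j) ** aflow (T j)) \<longlonglongrightarrow> l"
    unfolding \<nu>_def using conv_main[OF _ _ n l u T, of s] slim the sG Gd_lor by auto
  define ns where "ns = (\<lambda>j. aflow (- T j) ** \<nu> j ** aflow (T j))"
  have nsN: "ns j \<in> Ngrp" for j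
  proof -
    have "lowU (aflow (- T j) ** \<nu> j ** aflow (- (- T j)))" unfolding \<nu>_def by (rule lowU_conj[OF lowU_nv])
    moreover have "ns j \<in> Gd" unfolding ns_def \<nu>_def using Gd_mult Gd_aflow Gd_nv by metis
    ultimately show ?thesis by (simp add: ns_def Ngrp_I)
  qed
  have Zeq: "ns j ** g ** \<gamma> j = aflow (- T j) ** (\<nu> j ** s j) ** aflow (T j) ** g" for j
  proof -
    have "aflow (- T j) ** (\<nu> j ** s j) ** aflow (T j) ** g
        = aflow (- T j) ** \<nu> j ** (aflow (T j) ** g ** \<gamma> j ** (matrix_inv g ** (aflow (- T j) ** aflow (T j)) ** g))"
      by (simp add: sj T_def matrix_mul_assoc)
    also have "\<dots> = aflow (- T j) ** \<nu> j ** (aflow (T j) ** g ** \<gamma> j)"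
      using Gd_inv_left[OF g] by (simp add: aflow_add)
    also have "\<dots> = ns j ** g ** \<gamma> j" by (simp add: ns_def matrix_mul_assoc)
    finally show ?thesis by simp
  qed
  have Zlim: "(\<lambda>j. ns j ** g ** \<gamma> j) \<longlonglongrightarrow> l ** g"
    unfolding Zeq by (intro tendsto_mmult conv tendsto_const)
  have ZG: "ns j ** g ** \<gamma> j \<in> Gd" for j
    using Ngrp_Gd[OF nsN] g subgroup_Gd[OF \<Gamma> \<gamma>] Gd_mult by metis
  have lG: "l ** g \<in> Gd" using MA_props(1)[OF l] g Gd_mult by metis
  have "limitin (quot_top \<Gamma>) (\<lambda>j. gcoset (ns j ** g ** \<gamma> j) \<Gamma>) (gcoset (l ** g) \<Gamma>) sequentially"
    by (rule limitin_quot[OF \<Gamma> Zlim ZG lG])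
  moreover have "gcoset (ns j ** g ** \<gamma> j) \<Gamma> = gcoset (ns j ** g) \<Gamma>" for j
    by (rule gcoset_mult[OF \<Gamma> \<gamma>])
  ultimately show ?thesis using nsN dl l by auto
qed

lemma one_MA: "mat 1 \<in> MAgrp"
proof -
  have "mat 1 \<in> Mgrp" using Gd_one by (simp add: Mgrp_def Kgrp_def)
  hence "mat 1 ** aflow 0 \<in> MAgrp" unfolding MAgrp_def by blast
  thus ?thesis by simp
qed

lemma one_N: "mat 1 \<in> Ngrp"
  by (rule Ngrp_I[OF Gd_one]) (simp add: lowU_def Pprod)

theorem lemma7p5:
  fixes \<Gamma> \<Theta> :: "('n::finite) mat set"
    and g \<theta> :: "'n mat"
    and t :: "nat \<Rightarrow> real"
  assumes "is_subgroup \<Gamma>" and "discrete_set \<Gamma>"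
    and "g \<in> Gd"
    and "filterlim t at_top sequentially"
    and "is_subgroup \<Theta>" and "closed \<Theta>"
    and "geometric_limit
           (\<lambda>j. (\<lambda>\<gamma>. aflow (t j) ** g ** \<gamma> ** matrix_inv g ** aflow (- t j)) ` \<Gamma>) \<Theta>"
    and "\<theta> \<in> \<Theta> \<inter> NMAU" and "\<theta> \<noteq> mat 1"
  shows "gcoset (delta \<theta> ** g) \<Gamma> \<in>
           (quot_top \<Gamma>) closure_of {gcoset (n ** g) \<Gamma> | n. n \<in> Ngrp}
       \<and> (\<exists>ns. (\<forall>j. ns j \<in> Ngrp) \<and>
            limitin (quot_top \<Gamma>) (\<lambda>j. gcoset (ns j ** g) \<Gamma>)
                    (gcoset (delta \<theta> ** g) \<Gamma>) sequentially)
       \<and> delta ` \<Theta> \<subseteq> Delta_x g \<Gamma>"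
proof -
  note \<Gamma> = assms(1) and g = assms(3) and t = assms(4) and GL = assms(7)
  have gen: "delta \<theta>' \<in> MAgrp \<and> gcoset (delta \<theta>' ** g) \<Gamma> \<in>
           (quot_top \<Gamma>) closure_of {gcoset (n ** g) \<Gamma> | n. n \<in> Ngrp}" if th: "\<theta>' \<in> \<Theta>" for \<theta>'
  proof (cases "\<theta>' \<in> NMAU")
    case True
    note cr = core[OF \<Gamma> g t GL th True]
    then obtain ns where nsN: "\<forall>j. ns j \<in> Ngrp" and
      lim: "limitin (quot_top \<Gamma>) (\<lambda>j. gcoset (ns j ** g) \<Gamma>) (gcoset (delta \<theta>' ** g) \<Gamma>) sequentially"
      by blast
    have mem: "gcoset (ns k ** g) \<Gamma> \<in> {gcoset (n ** g) \<Gamma> | n. n \<in> Ngrp}" for k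
      using nsN by blast
    have "gcoset (delta \<theta>' ** g) \<Gamma> \<in> (quot_top \<Gamma>) closure_of {gcoset (n ** g) \<Gamma> | n. n \<in> Ngrp}"
      by (rule limitin_closure[OF lim mem])
    thus ?thesis using cr by simp
  next
    case False
    hence d: "delta \<theta>' = mat 1" by (simp add: delta_def)
    have "limitin (quot_top \<Gamma>) (\<lambda>j. gcoset (mat 1 ** g) \<Gamma>) (gcoset (mat 1 ** g) \<Gamma>) sequentially"
      using g by (intro limitin_quot[OF \<Gamma>]) (simp_all add: Gd_one)
    moreover have "gcoset (mat 1 ** g) \<Gamma> \<in> {gcoset (n ** g) \<Gamma> | n. n \<in> Ngrp}"
      using one_N by blast
    ultimately have "gcoset (mat 1 ** g) \<Gamma> \<in> (quot_top \<Gamma>) closure_of {gcoset (n ** g) \<Gamma> | n. n \<in> Ngrp}"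
      by (rule limitin_closure)
    thus ?thesis using d one_MA by simp
  qed
  have th: "\<theta> \<in> \<Theta>" "\<theta> \<in> NMAU" using assms(8) by auto
  have c2: "\<exists>ns. (\<forall>j. ns j \<in> Ngrp) \<and>
            limitin (quot_top \<Gamma>) (\<lambda>j. gcoset (ns j ** g) \<Gamma>)
                    (gcoset (delta \<theta> ** g) \<Gamma>) sequentially"
    using core[OF \<Gamma> g t GL th] by blast
  have c3: "delta ` \<Theta> \<subseteq> Delta_x g \<Gamma>"
  proof
    fix x assume "x \<in> delta ` \<Theta>"
    then obtain \<theta>' where "\<theta>' \<in> \<Theta>" "x = delta \<theta>'" by blast
    thus "x \<in> Delta_x g \<Gamma>" using gen[of \<theta>'] unfolding Delta_x_def by blast
  qed
  have c1: "gcoset (delta \<theta> ** g) \<Gamma> \<in> (quot_top \<Gamma>) closure_of {gcoset (n ** g) \<Gamma> | n. n \<in> Ngrp}"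
    using gen[OF th(1)] by (rule conjunct2)
  from c1 c2 c3 show ?thesis by (intro conjI)
qed


end
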